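(* Consider the linear structural equation model described in the context. Suppose that either Assumption A or Assumption A$'$ holds. If $\beta_{X\to Y}\beta_{Y\to X}=0$, then $(\beta_{X\to Y},\beta_{Y\to X})$ is identifiable, i.e. uniquely determined by the joint distribution of the observed variables $(X_i,Y_i,Z_i)$.
   Context: Observations $(X_i,Y_i,Z_i,U_i)$, $i=1,\dots,n$, are i.i.d.; $X_i,Y_i\in\mathbb{R}$ are observed with finite variance, $Z_i\in\mathbb{R}^p$ is an observed vector of candidate instruments, $U_i$ is unobserved. Assume $E(X_i)=E(Y_i)=0$, $E(Z_i)=0$, and $\Sigma=E(Z_iZ_i^{T})$ invertible. The data satisfy $$Y_i=\beta_{X\to Y}X_i+\pi_Y^{T}Z_i+\xi_Y(U_i)+\zeta_i,\qquad X_i=\beta_{Y\to X}Y_i+\pi_X^{T}Z_i+\xi_X(U_i)+\eta_i,$$ with $\pi_X,\pi_Y\in\mathbb{R}^p$, mean-zero functions $\xi_Y(U_i),\xi_X(U_i)$, $Z_i$ independent of $U_i$, and $E(\zeta_i\mid\eta_i,Z_i,U_i)=E(\eta_i\mid\zeta_i,Z_i,U_i)=0$. The matrix $B=\begin{pmatrix}0&\beta_{X\to Y}\\ \beta_{Y\to X}&0\end{pmatrix}$ has spectral norm $<1$, and $(Y_i,X_i)^T=(I-B)^{-1}\{(\pi_Y^TZ_i,\pi_X^TZ_i)^T+(R_{Y,i},R_{X,i})^T\}$ where $R_{Y,i}=\xi_Y(U_i)+\zeta_i$, $R_{X,i}=\xi_X(U_i)+\eta_i$. Then $E(Y_i\mid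 Z_i)=\gamma_Y^TZ_i$, $E(X_i\mid Z_i)=\gamma_X^TZ_i$ with $\gamma_Y=(\pi_Y+\beta_{X\to Y}\pi_X)/(1-\beta_{X\to Y}\beta_{Y\to X})$, $\gamma_X=(\pi_X+\beta_{Y\to X}\pi_Y)/(1-\beta_{X\to Y}\beta_{Y\to X})$. Sets: $\mathcal{V}_{X\to Y}=\{j:\pi_{X,j}\neq0,\pi_{Y,j}=0\}$, $\mathcal{V}_{Y\to X}=\{j:\pi_{Y,j}\neq0,\pi_{X,j}=0\}$, $\mathcal{V}_{pl}=\{j:\pi_{X,j}\neq0,\pi_{Y,j}\neq0\}$, $\mathcal{S}_X=\{j:\gamma_{X,j}\neq0\}$, $\mathcal{S}_Y=\{j:\gamma_{Y,j}\neq0\}$. Maxima over empty collections are $0$; $\mathbb{1}$ is the indicator. Assumption A: $|\mathcal{V}_{X\to Y}|>\max\big(\max_c|\{j\in\mathcal{V}_{pl}\cap\mathcal{S}_X:\pi_{Y,j}/\gamma_{X,j}=c\}|,\ |\mathcal{V}_{Y\to X}|\mathbb{1}(\beta_{Y\to X}\neq0),\ |\mathcal{V}_{pl}\setminus\mathcal{S}_X|\mathbb{1}(\beta_{Y\to X}\neq0)\big)$, and $\mathrm{Cov}(Y_iR_{Y,i},Z_i)\neq0$. Assumption A$'$: $|\mathcal{V}_{Y\to X}|>\max\big(\max_c|\{j\in\mathcal{V}_{pl}\cap\mathcal{S}_Y:\pi_{X,j}/\gamma_{Y,j}=c\}|,\ |\mathcal{V}_{X\to Y}|\mathbb{1}(\beta_{X\to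 Y}\neq0),\ |\mathcal{V}_{pl}\setminus\mathcal{S}_Y|\mathbb{1}(\beta_{X\to Y}\neq0)\big)$, and $\mathrm{Cov}(X_iR_{X,i},Z_i)\neq0$. *)

theory Defs
  imports "HOL-Probability.Probability"
begin

text \<open>Observations are i.i.d., so the joint law of the sample is determined by (and determines)
  the law of a single observation; we therefore model one generic observation.\<close>

definition Bmat :: "real \<Rightarrow> real \<Rightarrow> real^2^2" where
  "Bmat bxy byx = vector [vector [0, bxy], vector [byx, 0]]"

definition spec_norm :: "real^2^2 \<Rightarrow> real" where
  "spec_norm A = onorm (\<lambda>v. A *v v)"

definition gammaY :: "real \<Rightarrow> real \<Rightarrow> real^'p \<Rightarrow> real^'p \<Rightarrow> real^'p" where
  "gammaY bxy byx piX piY = (1 / (1 - bxy * byx)) *\<^sub>R (piY + bxy *\<^sub>R piX)"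

definition gammaX :: "real \<Rightarrow> real \<Rightarrow> real^'p \<Rightarrow> real^'p \<Rightarrow> real^'p" where
  "gammaX bxy byx piX piY = (1 / (1 - bxy * byx)) *\<^sub>R (piX + byx *\<^sub>R piY)"

definition V_XY :: "real^'p \<Rightarrow> real^'p \<Rightarrow> 'p set" where
  "V_XY piX piY = {j. piX $ j \<noteq> 0 \<and> piY $ j = 0}"

definition V_YX :: "real^'p \<Rightarrow> real^'p \<Rightarrow> 'p set" where
  "V_YX piX piY = {j. piY $ j \<noteq> 0 \<and> piX $ j = 0}"

definition V_pl :: "real^'p \<Rightarrow> real^'p \<Rightarrow> 'p set" where
  "V_pl piX piY = {j. piX $ j \<noteq> 0 \<and> piY $ j \<noteq> 0}"

definition supp :: "real^'p \<Rightarrow> 'p set" where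
  "supp g = {j. g $ j \<noteq> 0}"

text \<open>max over c of |{j in A. f j = c}|, with max over the empty collection = 0
  (values c outside f ` A contribute 0).\<close>
definition max_level :: "('p \<Rightarrow> real) \<Rightarrow> 'p set \<Rightarrow> nat" where
  "max_level f A = Max ({0} \<union> (\<lambda>c. card {j \<in> A. f j = c}) ` (f ` A))"

definition ind :: "bool \<Rightarrow> nat" where
  "ind b = (if b then 1 else 0)"

definition cov_vec :: "'a measure \<Rightarrow> ('a \<Rightarrow> real) \<Rightarrow> ('a \<Rightarrow> real^'p) \<Rightarrow> real^'p" where
  "cov_vec M W Z = (\<chi> j. (\<integral>\<omega>. W \<omega> * Z \<omega> $ j \<partial>M) - (\<integral>\<omega>. W \<omega> \<partial>M) * (\<integral>\<omega>. Z \<omega> $ j \<partial>M))"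

definition cond_exp3 :: "'a measure \<Rightarrow> 'u measure \<Rightarrow> ('a \<Rightarrow> real) \<Rightarrow> ('a \<Rightarrow> real^'p)
    \<Rightarrow> ('a \<Rightarrow> 'u) \<Rightarrow> ('a \<Rightarrow> real) \<Rightarrow> ('a \<Rightarrow> real)" where
  "cond_exp3 M N e Z U f =
     real_cond_exp M (vimage_algebra (space M) (\<lambda>\<omega>. (e \<omega>, Z \<omega>, U \<omega>))
        (borel \<Otimes>\<^sub>M borel \<Otimes>\<^sub>M N)) f"

definition sem_model ::
  "'a measure \<Rightarrow> 'u measure \<Rightarrow> ('a \<Rightarrow> real) \<Rightarrow> ('a \<Rightarrow> real) \<Rightarrow> ('a \<Rightarrow> real^'p) \<Rightarrow> ('a \<Rightarrow> 'u)
   \<Rightarrow> ('a \<Rightarrow> real) \<Rightarrow> ('a \<Rightarrow> real) \<Rightarrow> ('u \<Rightarrow> real) \<Rightarrow> ('u \<Rightarrow> real)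
   \<Rightarrow> real \<Rightarrow> real \<Rightarrow> real^'p \<Rightarrow> real^'p \<Rightarrow> bool" where
  "sem_model M N X Y Z U zeta eta xiY xiX bxy byx piX piY \<longleftrightarrow>
     prob_space M \<and>
     X \<in> borel_measurable M \<and> Y \<in> borel_measurable M \<and> Z \<in> borel_measurable M \<and>
     U \<in> measurable M N \<and> zeta \<in> borel_measurable M \<and> eta \<in> borel_measurable M \<and>
     xiY \<in> borel_measurable N \<and> xiX \<in> borel_measurable N \<and>
     integrable M (\<lambda>\<omega>. (X \<omega>)\<^sup>2) \<and> integrable M (\<lambda>\<omega>. (Y \<omega>)\<^sup>2) \<and>
     (\<integral>\<omega>. X \<omega> \<partial>M) = 0 \<and> (\<integral>\<omega>. Y \<omega> \<partial>M) = 0 \<and>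
     (\<forall>j. integrable M (\<lambda>\<omega>. (Z \<omega> $ j)\<^sup>2) \<and> (\<integral>\<omega>. Z \<omega> $ j \<partial>M) = 0) \<and>
     invertible (\<chi> j k. \<integral>\<omega>. Z \<omega> $ j * Z \<omega> $ k \<partial>M) \<and>
     (AE \<omega> in M. Y \<omega> = bxy * X \<omega> + piY \<bullet> Z \<omega> + xiY (U \<omega>) + zeta \<omega>) \<and>
     (AE \<omega> in M. X \<omega> = byx * Y \<omega> + piX \<bullet> Z \<omega> + xiX (U \<omega>) + eta \<omega>) \<and>
     integrable M (\<lambda>\<omega>. xiY (U \<omega>)) \<and> (\<integral>\<omega>. xiY (U \<omega>) \<partial>M) = 0 \<and>
     integrable M (\<lambda>\<omega>. xiX (U \<omega>)) \<and> (\<integral>\<omega>. xiX (U \<omega>) \<partial>M) = 0 \<and>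
     distr M (borel \<Otimes>\<^sub>M N) (\<lambda>\<omega>. (Z \<omega>, U \<omega>)) = distr M borel Z \<Otimes>\<^sub>M distr M N U \<and>
     integrable M zeta \<and> integrable M eta \<and>
     (AE \<omega> in M. cond_exp3 M N eta Z U zeta \<omega> = 0) \<and>
     (AE \<omega> in M. cond_exp3 M N zeta Z U eta \<omega> = 0) \<and>
     spec_norm (Bmat bxy byx) < 1"

definition assumption_A ::
  "'a measure \<Rightarrow> ('a \<Rightarrow> real) \<Rightarrow> ('a \<Rightarrow> real) \<Rightarrow> ('a \<Rightarrow> real^'p)
   \<Rightarrow> real \<Rightarrow> real \<Rightarrow> real^'p \<Rightarrow> real^'p \<Rightarrow> bool" where
  "assumption_A M Y RY Z bxy byx piX piY \<longleftrightarrow>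
     (let gX = gammaX bxy byx piX piY in
      card (V_XY piX piY) >
        max (max_level (\<lambda>j. piY $ j / gX $ j) (V_pl piX piY \<inter> supp gX))
          (max (card (V_YX piX piY) * ind (byx \<noteq> 0))
               (card (V_pl piX piY - supp gX) * ind (byx \<noteq> 0)))) \<and>
     cov_vec M (\<lambda>\<omega>. Y \<omega> * RY \<omega>) Z \<noteq> 0"

definition assumption_A' ::
  "'a measure \<Rightarrow> ('a \<Rightarrow> real) \<Rightarrow> ('a \<Rightarrow> real) \<Rightarrow> ('a \<Rightarrow> real^'p)
   \<Rightarrow> real \<Rightarrow> real \<Rightarrow> real^'p \<Rightarrow> real^'p \<Rightarrow> bool" where
  "assumption_A' M X RX Z bxy byx piX piY \<longleftrightarrow>
     (let gY = gammaY bxy byx piX piY in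
      card (V_YX piX piY) >
        max (max_level (\<lambda>j. piX $ j / gY $ j) (V_pl piX piY \<inter> supp gY))
          (max (card (V_XY piX piY) * ind (bxy \<noteq> 0))
               (card (V_pl piX piY - supp gY) * ind (bxy \<noteq> 0)))) \<and>
     cov_vec M (\<lambda>\<omega>. X \<omega> * RX \<omega>) Z \<noteq> 0"

definition admissible ::
  "'a measure \<Rightarrow> 'u measure \<Rightarrow> ('a \<Rightarrow> real) \<Rightarrow> ('a \<Rightarrow> real) \<Rightarrow> ('a \<Rightarrow> real^'p) \<Rightarrow> ('a \<Rightarrow> 'u)
   \<Rightarrow> ('a \<Rightarrow> real) \<Rightarrow> ('a \<Rightarrow> real) \<Rightarrow> ('u \<Rightarrow> real) \<Rightarrow> ('u \<Rightarrow> real)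
   \<Rightarrow> real \<Rightarrow> real \<Rightarrow> real^'p \<Rightarrow> real^'p \<Rightarrow> bool" where
  "admissible M N X Y Z U zeta eta xiY xiX bxy byx piX piY \<longleftrightarrow>
     sem_model M N X Y Z U zeta eta xiY xiX bxy byx piX piY \<and>
     (assumption_A M Y (\<lambda>\<omega>. xiY (U \<omega>) + zeta \<omega>) Z bxy byx piX piY \<or>
      assumption_A' M X (\<lambda>\<omega>. xiX (U \<omega>) + eta \<omega>) Z bxy byx piX piY) \<and>
     bxy * byx = 0"

end

theory Submission
  imports Defs
begin

definition gA :: "real \<Rightarrow> real \<Rightarrow> real^'p \<Rightarrow> real^'p \<Rightarrow> bool" where
  "gA bxy byx piX piY \<longleftrightarrow>
     (let gX = gammaX bxy byx piX piY in
      card (V_XY piX piY) >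
        max (max_level (\<lambda>j. piY $ j / gX $ j) (V_pl piX piY \<inter> supp gX))
          (max (card (V_YX piX piY) * ind (byx \<noteq> 0))
               (card (V_pl piX piY - supp gX) * ind (byx \<noteq> 0))))"

lemma assumption_A_iff:
  "assumption_A M Y RY Z b c piX piY \<longleftrightarrow> gA b c piX piY \<and> cov_vec M (\<lambda>\<omega>. Y \<omega> * RY \<omega>) Z \<noteq> 0"
  unfolding assumption_A_def gA_def by simp

lemma assumption_A'_iff:
  "assumption_A' M X RX Z b c piX piY \<longleftrightarrow> gA c b piY piX \<and> cov_vec M (\<lambda>\<omega>. X \<omega> * RX \<omega>) Z \<noteq> 0"
proof -
  have 1: "gammaY b c piX piY = gammaX c b piY piX" unfolding gammaY_def gammaX_def by (simp add: mult.commute)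
  have 2: "V_YX piX piY = V_XY piY piX" unfolding V_YX_def V_XY_def by auto
  have 3: "V_pl piX piY = V_pl piY piX" unfolding V_pl_def by auto
  have 4: "V_XY piX piY = V_YX piY piX" unfolding V_YX_def V_XY_def by auto
  show ?thesis unfolding assumption_A'_def gA_def 1 2 3 4 by simp
qed

lemma level_le:
  fixes f :: "'p::finite \<Rightarrow> real"
  assumes "T \<subseteq> A" "\<And>j. j \<in> T \<Longrightarrow> f j = v"
  shows "card T \<le> max_level f A"
proof (cases "T = {}")
  case True then show ?thesis by simp
next
  case False
  then obtain j0 where j0: "j0 \<in> T" by auto
  have "card T \<le> card {j \<in> A. f j = v}"
    by (rule card_mono) (use assms in auto)
  also have "\<dots> \<le> Max ({0} \<union> (\<lambda>c. card {j \<in> A. f j = c}) ` (f ` A))"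
    by (rule Max_ge) (use j0 assms in force)+
  finally show ?thesis unfolding max_level_def .
qed

lemma gA_D:
  fixes p q :: "real^'p"
  assumes "gA b c p q"
  shows "\<And>T v. T \<subseteq> V_pl p q \<inter> supp (gammaX b c p q) \<Longrightarrow> (\<And>j. j \<in> T \<Longrightarrow> q $ j / gammaX b c p q $ j = v)
            \<Longrightarrow> card T < card (V_XY p q)"
    and "c \<noteq> 0 \<Longrightarrow> card (V_YX p q) < card (V_XY p q)"
    and "c \<noteq> 0 \<Longrightarrow> card (V_pl p q - supp (gammaX b c p q)) < card (V_XY p q)"
proof -
  let ?g = "gammaX b c p q"
  have A: "card (V_XY p q) > max (max_level (\<lambda>j. q $ j / ?g $ j) (V_pl p q \<inter> supp ?g))
          (max (card (V_YX p q) * ind (c \<noteq> 0)) (card (V_pl p q - supp ?g) * ind (c \<noteq> 0)))"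
    using assms unfolding gA_def Let_def by simp
  fix T v assume "T \<subseteq> V_pl p q \<inter> supp ?g" "\<And>j. j \<in> T \<Longrightarrow> q $ j / ?g $ j = v"
  then have "card T \<le> max_level (\<lambda>j. q $ j / ?g $ j) (V_pl p q \<inter> supp ?g)"
    by (rule level_le)
  then show "card T < card (V_XY p q)" using A by linarith
next
  let ?g = "gammaX b c p q"
  have A: "card (V_XY p q) > max (max_level (\<lambda>j. q $ j / ?g $ j) (V_pl p q \<inter> supp ?g))
          (max (card (V_YX p q) * ind (c \<noteq> 0)) (card (V_pl p q - supp ?g) * ind (c \<noteq> 0)))"
    using assms unfolding gA_def Let_def by simp
  assume "c \<noteq> 0" then show "card (V_YX p q) < card (V_XY p q)" using A by (simp add: ind_def)
next
  let ?g = "gammaX b c p q"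
  have A: "card (V_XY p q) > max (max_level (\<lambda>j. q $ j / ?g $ j) (V_pl p q \<inter> supp ?g))
          (max (card (V_YX p q) * ind (c \<noteq> 0)) (card (V_pl p q - supp ?g) * ind (c \<noteq> 0)))"
    using assms unfolding gA_def Let_def by simp
  assume "c \<noteq> 0" then show "card (V_pl p q - supp ?g) < card (V_XY p q)" using A by (simp add: ind_def)
qed

lemma gammaX_0: "gammaX b 0 p q = p" unfolding gammaX_def by simp
lemma gammaX_0': "gammaX 0 c p q = p + c *\<^sub>R q" unfolding gammaX_def by simp
lemma gammaY_0: "gammaY b 0 p q = q + b *\<^sub>R p" unfolding gammaY_def by simp
lemma gammaY_0': "gammaY 0 c p q = q" unfolding gammaY_def by simp

lemma G1half:
  fixes g k :: "real^'p"
  assumes "b1 \<noteq> b2" "gA b1 0 g (k - b1 *\<^sub>R g)"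
  shows "card (V_XY g (k - b2 *\<^sub>R g)) < card (V_XY g (k - b1 *\<^sub>R g))"
proof (rule gA_D(1)[OF assms(2), where v = "b2 - b1"])
  show "V_XY g (k - b2 *\<^sub>R g) \<subseteq> V_pl g (k - b1 *\<^sub>R g) \<inter> supp (gammaX b1 0 g (k - b1 *\<^sub>R g))"
    using assms(1) unfolding V_XY_def V_pl_def supp_def gammaX_0 by auto
  fix j assume "j \<in> V_XY g (k - b2 *\<^sub>R g)"
  then show "(k - b1 *\<^sub>R g) $ j / gammaX b1 0 g (k - b1 *\<^sub>R g) $ j = b2 - b1"
    unfolding V_XY_def gammaX_0 by (auto simp: field_simps)
qed

lemma G1:
  fixes g k :: "real^'p"
  assumes "b1 \<noteq> b2" "gA b1 0 g (k - b1 *\<^sub>R g)" "gA b2 0 g (k - b2 *\<^sub>R g)"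
  shows False
  using G1half[OF assms(1,2)] G1half[OF _ assms(3), of b1] assms(1) by auto

lemma G3:
  fixes g k :: "real^'p"
  assumes b: "b \<noteq> 0" and c: "c \<noteq> 0" and bc: "b * c \<noteq> 1"
    and m1: "gA b 0 g (k - b *\<^sub>R g) \<or> gA 0 b (k - b *\<^sub>R g) g"
    and m2: "gA 0 c (g - c *\<^sub>R k) k \<or> gA c 0 k (g - c *\<^sub>R k)"
  shows False
proof -
  define P where "P = {j. g $ j \<noteq> 0 \<and> k $ j = b * g $ j}"
  define Q where "Q = {j. g $ j \<noteq> 0 \<and> k $ j = 0}"
  define R where "R = {j. k $ j \<noteq> 0 \<and> g $ j = c * k $ j}"
  define S where "S = {j. g $ j = 0 \<and> k $ j \<noteq> 0}"
  have bc': "c * b \<noteq> 1" using bc by (simp add: mult.commute)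
  have g1: "gammaX b 0 g (k - b *\<^sub>R g) = g" by (simp add: gammaX_0)
  have g2: "gammaX 0 b (k - b *\<^sub>R g) g = k" by (simp add: gammaX_0')
  have g3: "gammaX 0 c (g - c *\<^sub>R k) k = g" by (simp add: gammaX_0')
  have g4: "gammaX c 0 k (g - c *\<^sub>R k) = k" by (simp add: gammaX_0)
  have PQ1: "gA b 0 g (k - b *\<^sub>R g) \<Longrightarrow> card Q < card P"
  proof -
    assume h: "gA b 0 g (k - b *\<^sub>R g)"
    have e: "V_XY g (k - b *\<^sub>R g) = P" unfolding V_XY_def P_def by auto
    show ?thesis unfolding e[symmetric]
      by (rule gA_D(1)[OF h, where v = "-b"]) (use b in \<open>auto simp: Q_def V_pl_def supp_def g1\<close>)
  qed
  have PR1: "gA b 0 g (k - b *\<^sub>R g) \<Longrightarrow> card R < card P"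
  proof -
    assume h: "gA b 0 g (k - b *\<^sub>R g)"
    have e: "V_XY g (k - b *\<^sub>R g) = P" unfolding V_XY_def P_def by auto
    show ?thesis unfolding e[symmetric]
    proof (rule gA_D(1)[OF h, where v = "1/c - b"])
      show "R \<subseteq> V_pl g (k - b *\<^sub>R g) \<inter> supp (gammaX b 0 g (k - b *\<^sub>R g))"
      proof
        fix j assume "j \<in> R"
        then have "k $ j \<noteq> 0" "g $ j = c * k $ j" by (auto simp: R_def)
        moreover have "k $ j - b * (c * k $ j) \<noteq> 0"
        proof
          assume "k $ j - b * (c * k $ j) = 0"
          then have "k $ j * (1 - b * c) = 0" by (simp add: algebra_simps)
          with \<open>k $ j \<noteq> 0\<close> bc show False by simp
        qed
        ultimately show "j \<in> V_pl g (k - b *\<^sub>R g) \<inter> supp (gammaX b 0 g (k - b *\<^sub>R g))"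
          using c by (auto simp: V_pl_def supp_def g1)
      qed
      fix j assume "j \<in> R"
      then have "k $ j \<noteq> 0" "g $ j = c * k $ j" by (auto simp: R_def)
      then show "(k - b *\<^sub>R g) $ j / gammaX b 0 g (k - b *\<^sub>R g) $ j = 1 / c - b"
        using c by (simp add: g1 field_simps)
    qed
  qed
  have SQ1: "gA 0 b (k - b *\<^sub>R g) g \<Longrightarrow> card Q < card S"
  proof -
    assume h: "gA 0 b (k - b *\<^sub>R g) g"
    have e: "V_XY (k - b *\<^sub>R g) g = S" unfolding V_XY_def S_def by auto
    have e2: "V_pl (k - b *\<^sub>R g) g - supp (gammaX 0 b (k - b *\<^sub>R g) g) = Q"
      using b unfolding V_pl_def supp_def g2 Q_def by auto
    show ?thesis using gA_D(3)[OF h b] unfolding e e2 .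
  qed
  have SR1: "gA 0 b (k - b *\<^sub>R g) g \<Longrightarrow> card R < card S"
  proof -
    assume h: "gA 0 b (k - b *\<^sub>R g) g"
    have e: "V_XY (k - b *\<^sub>R g) g = S" unfolding V_XY_def S_def by auto
    show ?thesis unfolding e[symmetric]
    proof (rule gA_D(1)[OF h, where v = "c"])
      show "R \<subseteq> V_pl (k - b *\<^sub>R g) g \<inter> supp (gammaX 0 b (k - b *\<^sub>R g) g)"
      proof
        fix j assume "j \<in> R"
        then have "k $ j \<noteq> 0" "g $ j = c * k $ j" by (auto simp: R_def)
        moreover have "k $ j - b * (c * k $ j) \<noteq> 0"
        proof
          assume "k $ j - b * (c * k $ j) = 0"
          then have "k $ j * (1 - b * c) = 0" by (simp add: algebra_simps)
          with \<open>k $ j \<noteq> 0\<close> bc show False by simp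
        qed
        ultimately show "j \<in> V_pl (k - b *\<^sub>R g) g \<inter> supp (gammaX 0 b (k - b *\<^sub>R g) g)"
          using c by (auto simp: V_pl_def supp_def g2)
      qed
      fix j assume "j \<in> R"
      then have "k $ j \<noteq> 0" "g $ j = c * k $ j" by (auto simp: R_def)
      then show "g $ j / gammaX 0 b (k - b *\<^sub>R g) g $ j = c"
        by (simp add: g2)
    qed
  qed
  have QP2: "gA 0 c (g - c *\<^sub>R k) k \<Longrightarrow> card P < card Q"
  proof -
    assume h: "gA 0 c (g - c *\<^sub>R k) k"
    have e: "V_XY (g - c *\<^sub>R k) k = Q" unfolding V_XY_def Q_def by auto
    show ?thesis unfolding e[symmetric]
    proof (rule gA_D(1)[OF h, where v = "b"])
      show "P \<subseteq> V_pl (g - c *\<^sub>R k) k \<inter> supp (gammaX 0 c (g - c *\<^sub>R k) k)"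
      proof
        fix j assume "j \<in> P"
        then have "g $ j \<noteq> 0" "k $ j = b * g $ j" by (auto simp: P_def)
        moreover have "g $ j - c * (b * g $ j) \<noteq> 0"
        proof
          assume "g $ j - c * (b * g $ j) = 0"
          then have "g $ j * (1 - c * b) = 0" by (simp add: algebra_simps)
          with \<open>g $ j \<noteq> 0\<close> bc' show False by simp
        qed
        ultimately show "j \<in> V_pl (g - c *\<^sub>R k) k \<inter> supp (gammaX 0 c (g - c *\<^sub>R k) k)"
          using b by (auto simp: V_pl_def supp_def g3)
      qed
      fix j assume "j \<in> P"
      then have "g $ j \<noteq> 0" "k $ j = b * g $ j" by (auto simp: P_def)
      then show "k $ j / gammaX 0 c (g - c *\<^sub>R k) k $ j = b"
        by (simp add: g3)
    qed
  qed
  have QS2: "gA 0 c (g - c *\<^sub>R k) k \<Longrightarrow> card S < card Q"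
  proof -
    assume h: "gA 0 c (g - c *\<^sub>R k) k"
    have e: "V_XY (g - c *\<^sub>R k) k = Q" unfolding V_XY_def Q_def by auto
    have e2: "V_pl (g - c *\<^sub>R k) k - supp (gammaX 0 c (g - c *\<^sub>R k) k) = S"
      using c unfolding V_pl_def supp_def g3 S_def by auto
    show ?thesis using gA_D(3)[OF h c] unfolding e e2 .
  qed
  have RP2: "gA c 0 k (g - c *\<^sub>R k) \<Longrightarrow> card P < card R"
  proof -
    assume h: "gA c 0 k (g - c *\<^sub>R k)"
    have e: "V_XY k (g - c *\<^sub>R k) = R" unfolding V_XY_def R_def by auto
    show ?thesis unfolding e[symmetric]
    proof (rule gA_D(1)[OF h, where v = "1/b - c"])
      show "P \<subseteq> V_pl k (g - c *\<^sub>R k) \<inter> supp (gammaX c 0 k (g - c *\<^sub>R k))"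
      proof
        fix j assume "j \<in> P"
        then have "g $ j \<noteq> 0" "k $ j = b * g $ j" by (auto simp: P_def)
        moreover have "g $ j - c * (b * g $ j) \<noteq> 0"
        proof
          assume "g $ j - c * (b * g $ j) = 0"
          then have "g $ j * (1 - c * b) = 0" by (simp add: algebra_simps)
          with \<open>g $ j \<noteq> 0\<close> bc' show False by simp
        qed
        ultimately show "j \<in> V_pl k (g - c *\<^sub>R k) \<inter> supp (gammaX c 0 k (g - c *\<^sub>R k))"
          using b by (auto simp: V_pl_def supp_def g4)
      qed
      fix j assume "j \<in> P"
      then have "g $ j \<noteq> 0" "k $ j = b * g $ j" by (auto simp: P_def)
      then show "(g - c *\<^sub>R k) $ j / gammaX c 0 k (g - c *\<^sub>R k) $ j = 1 / b - c"
        using b by (simp add: g4 field_simps)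
    qed
  qed
  have RS2: "gA c 0 k (g - c *\<^sub>R k) \<Longrightarrow> card S < card R"
  proof -
    assume h: "gA c 0 k (g - c *\<^sub>R k)"
    have e: "V_XY k (g - c *\<^sub>R k) = R" unfolding V_XY_def R_def by auto
    show ?thesis unfolding e[symmetric]
    proof (rule gA_D(1)[OF h, where v = "-c"])
      show "S \<subseteq> V_pl k (g - c *\<^sub>R k) \<inter> supp (gammaX c 0 k (g - c *\<^sub>R k))"
        using c by (auto simp: S_def V_pl_def supp_def g4)
      fix j assume "j \<in> S"
      then show "(g - c *\<^sub>R k) $ j / gammaX c 0 k (g - c *\<^sub>R k) $ j = - c"
        by (simp add: g4 S_def)
    qed
  qed
  show False using m1 m2 PQ1 PR1 SQ1 SR1 QP2 QS2 RP2 RS2 by fastforce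
qed

lemma spec_norm_bounds:
  assumes "spec_norm (Bmat b c) < 1"
  shows "\<bar>b\<bar> < 1" "\<bar>c\<bar> < 1"
proof -
  let ?B = "Bmat b c"
  have bl: "bounded_linear (\<lambda>v. ?B *v v)" by simp
  have e1: "(?B *v axis 2 1) $ 1 = b"
    unfolding Bmat_def matrix_vector_mult_def axis_def
    by (simp add: sum_2 vector_2)
  have e2: "(?B *v axis 1 1) $ 2 = c"
    unfolding Bmat_def matrix_vector_mult_def axis_def
    by (simp add: sum_2 vector_2)
  have "\<bar>b\<bar> \<le> norm (?B *v axis 2 1)" using component_le_norm_cart[of "?B *v axis 2 1" 1] e1 by simp
  also have "\<dots> \<le> onorm (\<lambda>v. ?B *v v) * norm (axis 2 (1::real) :: real^2)" by (rule onorm[OF bl])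
  also have "\<dots> < 1" using assms by (simp add: spec_norm_def)
  finally show "\<bar>b\<bar> < 1" .
  have "\<bar>c\<bar> \<le> norm (?B *v axis 1 1)" using component_le_norm_cart[of "?B *v axis 1 1" 2] e2 by simp
  also have "\<dots> \<le> onorm (\<lambda>v. ?B *v v) * norm (axis 1 (1::real) :: real^2)" by (rule onorm[OF bl])
  also have "\<dots> < 1" using assms by (simp add: spec_norm_def)
  finally show "\<bar>c\<bar> < 1" .
qed

lemma bc_ne_1: "\<bar>b\<bar> < 1 \<Longrightarrow> \<bar>c\<bar> < 1 \<Longrightarrow> b * c \<noteq> (1::real)"
proof
  assume "\<bar>b\<bar> < 1" "\<bar>c\<bar> < 1" "b * c = 1"
  then have "\<bar>b * c\<bar> < 1" by (simp add: abs_mult mult_strict_mono' abs_less_iff) (smt (verit) mult_less_cancel_left1 mult_minus_left mult_minus_right)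
  then show False using \<open>b * c = 1\<close> by simp
qed

definition L2 :: "'a measure \<Rightarrow> ('a \<Rightarrow> real) \<Rightarrow> bool" where
  "L2 M f \<longleftrightarrow> f \<in> borel_measurable M \<and> integrable M (\<lambda>x. (f x)\<^sup>2)"

lemma L2_meas: "L2 M f \<Longrightarrow> f \<in> borel_measurable M" unfolding L2_def by simp

lemma L2_prod:
  assumes "L2 M f" "L2 M g"
  shows "integrable M (\<lambda>x. f x * g x)"
proof -
  have I: "integrable M (\<lambda>x. (f x)\<^sup>2 + (g x)\<^sup>2)" using assms unfolding L2_def by auto
  show ?thesis
  proof (rule Bochner_Integration.integrable_bound[OF I])
  show "(\<lambda>x. f x * g x) \<in> borel_measurable M" using assms unfolding L2_def by auto
  show "AE x in M. norm (f x * g x) \<le> norm ((f x)\<^sup>2 + (g x)\<^sup>2)"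
  proof (rule AE_I2)
    fix x
    have "0 \<le> (\<bar>f x\<bar> - \<bar>g x\<bar>)\<^sup>2" by simp
    then have "2 * \<bar>f x\<bar> * \<bar>g x\<bar> \<le> (f x)\<^sup>2 + (g x)\<^sup>2" by (simp add: power2_eq_square algebra_simps)
    then show "norm (f x * g x) \<le> norm ((f x)\<^sup>2 + (g x)\<^sup>2)"
    proof -
      have a: "0 \<le> \<bar>f x\<bar> * \<bar>g x\<bar>" by simp
      have b: "0 \<le> (f x)\<^sup>2 + (g x)\<^sup>2" by simp
      show ?thesis using a b \<open>2 * \<bar>f x\<bar> * \<bar>g x\<bar> \<le> (f x)\<^sup>2 + (g x)\<^sup>2\<close>
        by (simp only: real_norm_def abs_mult abs_of_nonneg[OF b])
    qed
  qed
  qed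
qed

lemma L2_add: "L2 M f \<Longrightarrow> L2 M g \<Longrightarrow> L2 M (\<lambda>x. f x + g x)"
proof -
  assume f: "L2 M f" and g: "L2 M g"
  have "integrable M (\<lambda>x. (f x)\<^sup>2 + 2 * (f x * g x) + (g x)\<^sup>2)"
    using f g L2_prod[OF f g] unfolding L2_def by auto
  moreover have "(\<lambda>x. (f x + g x)\<^sup>2) = (\<lambda>x. (f x)\<^sup>2 + 2 * (f x * g x) + (g x)\<^sup>2)"
    by (simp add: power2_sum fun_eq_iff)
  ultimately show ?thesis using f g unfolding L2_def by auto
qed

lemma L2_cmult: "L2 M f \<Longrightarrow> L2 M (\<lambda>x. c * f x)"
  unfolding L2_def by (auto simp: power_mult_distrib)

lemma L2_diff: "L2 M f \<Longrightarrow> L2 M g \<Longrightarrow> L2 M (\<lambda>x. f x - g x)"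
  using L2_add[of M f "\<lambda>x. (-1) * g x"] L2_cmult[of M g "-1"] by simp

lemma L2_sum: "finite I \<Longrightarrow> (\<And>i. i \<in> I \<Longrightarrow> L2 M (f i)) \<Longrightarrow> L2 M (\<lambda>x. \<Sum>i\<in>I. f i x)"
proof (induction I rule: finite_induct)
  case empty then show ?case by (simp add: L2_def)
next
  case (insert a I) then show ?case by (simp add: L2_add)
qed

lemma L2_bmult:
  assumes "L2 M f" "h \<in> borel_measurable M" "\<And>x. \<bar>h x\<bar> \<le> B"
  shows "L2 M (\<lambda>x. f x * h x)"
  unfolding L2_def
proof
  show "(\<lambda>x. f x * h x) \<in> borel_measurable M" using assms(2) L2_meas[OF assms(1)] by auto
  show "integrable M (\<lambda>x. (f x * h x)\<^sup>2)"
  proof -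
    have I: "integrable M (\<lambda>x. B\<^sup>2 * (f x)\<^sup>2)" using assms unfolding L2_def by auto
  show ?thesis
  proof (rule Bochner_Integration.integrable_bound[OF I])
    show "(\<lambda>x. (f x * h x)\<^sup>2) \<in> borel_measurable M" using assms(2) L2_meas[OF assms(1)] by auto
    show "AE x in M. norm ((f x * h x)\<^sup>2) \<le> norm (B\<^sup>2 * (f x)\<^sup>2)"
    proof (rule AE_I2)
      fix x
      have "\<bar>h x\<bar>\<^sup>2 \<le> B\<^sup>2" using assms(3)[of x] by (meson abs_ge_zero power_mono)
      then have "(h x)\<^sup>2 \<le> B\<^sup>2" by simp
      then have "(f x)\<^sup>2 * (h x)\<^sup>2 \<le> (f x)\<^sup>2 * B\<^sup>2" by (simp add: mult_left_mono)
      then show "norm ((f x * h x)\<^sup>2) \<le> norm (B\<^sup>2 * (f x)\<^sup>2)"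
        by (simp add: power_mult_distrib mult.commute)
    qed
  qed
  qed
qed

lemma L2_ae:
  assumes "L2 M f" "g \<in> borel_measurable M" "AE x in M. f x = g x"
  shows "L2 M g"
  unfolding L2_def
proof
  show "g \<in> borel_measurable M" by fact
  have "integrable M (\<lambda>x. (f x)\<^sup>2)" using assms L2_def by auto
  moreover have "AE x in M. (f x)\<^sup>2 = (g x)\<^sup>2" using assms(3) by auto
  ultimately show "integrable M (\<lambda>x. (g x)\<^sup>2)"
    using integrable_cong_AE[of "\<lambda>x. (f x)\<^sup>2" M "\<lambda>x. (g x)\<^sup>2"] assms L2_meas by auto
qed

lemma (in prob_space) L2_integrable:
  assumes "L2 M f" shows "integrable M f"
proof -
  have I: "integrable M (\<lambda>x. 1 + (f x)\<^sup>2)" using assms unfolding L2_def by auto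
  show ?thesis
  proof (rule Bochner_Integration.integrable_bound[OF I])
  show "f \<in> borel_measurable M" using assms L2_meas by auto
  show "AE x in M. norm (f x) \<le> norm (1 + (f x)\<^sup>2)"
  proof (rule AE_I2)
    fix x
    have "\<bar>f x\<bar> \<le> 1 + (f x)\<^sup>2"
    proof (cases "\<bar>f x\<bar> \<le> 1")
      case True
      have "0 \<le> (f x)\<^sup>2" by simp
      with True show ?thesis by linarith
    next
      case False
      then have "\<bar>f x\<bar> * 1 \<le> \<bar>f x\<bar> * \<bar>f x\<bar>" by (intro mult_left_mono) auto
      then show ?thesis by (simp add: power2_eq_square abs_mult_self_eq)
    qed
    then show "norm (f x) \<le> norm (1 + (f x)\<^sup>2)" by simp
  qed
  qed
qed

lemma (in prob_space) L2_const: "L2 M (\<lambda>x. c)"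
  unfolding L2_def by simp

lemma cond_zero:
  assumes P: "prob_space M" and W: "W \<in> measurable M K"
    and ce: "AE \<omega> in M. real_cond_exp M (vimage_algebra (space M) W K) z \<omega> = 0"
    and z: "z \<in> borel_measurable M" and F: "F \<in> borel_measurable K"
    and int: "integrable M (\<lambda>\<omega>. F (W \<omega>) * z \<omega>)"
  shows "(\<integral>\<omega>. F (W \<omega>) * z \<omega> \<partial>M) = 0"
proof -
  let ?G = "vimage_algebra (space M) W K"
  interpret prob_space M by fact
  have sub: "subalgebra M ?G"
    unfolding subalgebra_def using sets_image_in_sets[of M "space M" W K] W by auto
  interpret S: sigma_finite_subalgebra M ?G
    by (rule finite_measure_subalgebra_is_sigma_finite) (simp add: finite_measure_subalgebra_def finite_measure_subalgebra_axioms_def sub finite_measure_axioms)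
  have Wm: "W \<in> measurable ?G K"
    by (rule measurable_vimage_algebra1) (use W in \<open>auto simp: measurable_def\<close>)
  have FG: "(\<lambda>\<omega>. F (W \<omega>)) \<in> borel_measurable ?G"
    using measurable_comp[OF Wm F] by (simp add: comp_def)
  have "(\<integral>\<omega>. F (W \<omega>) * z \<omega> \<partial>M) = (\<integral>\<omega>. F (W \<omega>) * real_cond_exp M ?G z \<omega> \<partial>M)"
    using S.real_cond_exp_intg(2)[OF int FG z] by simp
  also have "\<dots> = (\<integral>\<omega>. 0 \<partial>M)"
    by (rule integral_cong_AE) (use ce FG z measurable_from_subalg[OF sub FG] in auto)
  finally show ?thesis by simp
qed

lemma cond_L2:
  assumes P: "prob_space M" and W: "W \<in> measurable M K"
    and ce: "AE \<omega> in M. real_cond_exp M (vimage_algebra (space M) W K) z \<omega> = 0"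
    and z: "integrable M z" and V: "V \<in> borel_measurable K" and Vi: "integrable M (\<lambda>\<omega>. V (W \<omega>))"
    and R: "L2 M R" and eq: "AE \<omega> in M. R \<omega> = V (W \<omega>) + z \<omega>"
  shows "L2 M (\<lambda>\<omega>. V (W \<omega>))" "L2 M z"
proof -
  let ?G = "vimage_algebra (space M) W K"
  interpret prob_space M by fact
  have sub: "subalgebra M ?G"
    unfolding subalgebra_def using sets_image_in_sets[of M "space M" W K] W by auto
  interpret S: sigma_finite_subalgebra M ?G
    by (rule finite_measure_subalgebra_is_sigma_finite) (simp add: finite_measure_subalgebra_def finite_measure_subalgebra_axioms_def sub finite_measure_axioms)
  have Wm: "W \<in> measurable ?G K"
    by (rule measurable_vimage_algebra1) (use W in \<open>auto simp: measurable_def\<close>)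
  have FG: "(\<lambda>\<omega>. V (W \<omega>)) \<in> borel_measurable ?G"
    using measurable_comp[OF Wm V] by (simp add: comp_def)
  have VM: "(\<lambda>\<omega>. V (W \<omega>)) \<in> borel_measurable M" using measurable_from_subalg[OF sub FG] .
  have Ri: "integrable M R" using L2_integrable[OF R] .
  have Rm: "R \<in> borel_measurable M" using R L2_meas by auto
  have zm: "z \<in> borel_measurable M" using z by auto
  have c1: "AE \<omega> in M. real_cond_exp M ?G R \<omega> = real_cond_exp M ?G (\<lambda>\<omega>. V (W \<omega>) + z \<omega>) \<omega>"
    by (rule S.real_cond_exp_cong) (use eq Rm VM zm in auto)
  have c2: "AE \<omega> in M. real_cond_exp M ?G (\<lambda>\<omega>. V (W \<omega>) + z \<omega>) \<omega> = real_cond_exp M ?G (\<lambda>\<omega>. V (W \<omega>)) \<omega> + real_cond_exp M ?G z \<omega>"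
    by (rule S.real_cond_exp_add) (use Vi z in auto)
  have c3: "AE \<omega> in M. real_cond_exp M ?G (\<lambda>\<omega>. V (W \<omega>)) \<omega> = V (W \<omega>)"
    by (rule S.real_cond_exp_F_meas) (use Vi FG in auto)
  have cR: "AE \<omega> in M. real_cond_exp M ?G R \<omega> = V (W \<omega>)"
    using c1 c2 c3 ce by auto
  have J: "AE \<omega> in M. (real_cond_exp M ?G R \<omega>)\<^sup>2 \<le> real_cond_exp M ?G (\<lambda>\<omega>. (R \<omega>)\<^sup>2) \<omega>"
    using S.real_cond_exp_jensens_inequality(2)[of R UNIV _ _ power2] Ri R convex_power2
    unfolding L2_def by auto
  have Ci: "integrable M (real_cond_exp M ?G (\<lambda>\<omega>. (R \<omega>)\<^sup>2))"
    using S.real_cond_exp_int(1) R unfolding L2_def by auto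
  show VL: "L2 M (\<lambda>\<omega>. V (W \<omega>))"
    unfolding L2_def
  proof
    show "(\<lambda>\<omega>. V (W \<omega>)) \<in> borel_measurable M" by (rule VM)
    show "integrable M (\<lambda>\<omega>. (V (W \<omega>))\<^sup>2)"
    proof (rule Bochner_Integration.integrable_bound[OF Ci])
      show "(\<lambda>\<omega>. (V (W \<omega>))\<^sup>2) \<in> borel_measurable M" using VM by auto
      show "AE \<omega> in M. norm ((V (W \<omega>))\<^sup>2) \<le> norm (real_cond_exp M ?G (\<lambda>\<omega>. (R \<omega>)\<^sup>2) \<omega>)"
        using J cR by eventually_elim auto
    qed
  qed
  show "L2 M z"
  proof (rule L2_ae[OF L2_diff[OF R VL] zm])
    show "AE \<omega> in M. R \<omega> - V (W \<omega>) = z \<omega>" using eq by auto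
  qed
qed

lemma indep_int:
  fixes Z :: "'a \<Rightarrow> 'z::{second_countable_topology, topological_space}" and f :: "'u \<Rightarrow> real" and g :: "'z \<Rightarrow> real"
  assumes P: "prob_space M" and Zm: "Z \<in> borel_measurable M" and Um: "U \<in> measurable M N"
    and ind: "distr M (borel \<Otimes>\<^sub>M N) (\<lambda>\<omega>. (Z \<omega>, U \<omega>)) = distr M borel Z \<Otimes>\<^sub>M distr M N U"
    and f[measurable]: "f \<in> borel_measurable N" and g[measurable]: "g \<in> borel_measurable borel"
    and fi: "integrable M (\<lambda>\<omega>. f (U \<omega>))" and gi: "integrable M (\<lambda>\<omega>. g (Z \<omega>))"
  shows "integrable M (\<lambda>\<omega>. g (Z \<omega>) * f (U \<omega>))"
    "(\<integral>\<omega>. g (Z \<omega>) * f (U \<omega>) \<partial>M) = (\<integral>\<omega>. g (Z \<omega>) \<partial>M) * (\<integral>\<omega>. f (U \<omega>) \<partial>M)"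
proof -
  interpret prob_space M by fact
  let ?P1 = "distr M borel Z" and ?P2 = "distr M N U"
  interpret P1: prob_space ?P1 by (rule prob_space_distr[OF Zm])
  interpret P2: prob_space ?P2 by (rule prob_space_distr[OF Um])
  interpret PP: pair_sigma_finite ?P1 ?P2
    by (simp add: pair_sigma_finite_def P1.sigma_finite_measure_axioms P2.sigma_finite_measure_axioms)
  have ZU: "(\<lambda>\<omega>. (Z \<omega>, U \<omega>)) \<in> measurable M (borel \<Otimes>\<^sub>M N)" using Zm Um by measurable
  have Fm: "(\<lambda>p. g (fst p) * f (snd p)) \<in> borel_measurable (borel \<Otimes>\<^sub>M N)"
    by measurable
  have Fm2: "(\<lambda>p. g (fst p) * f (snd p)) \<in> borel_measurable (?P1 \<Otimes>\<^sub>M ?P2)"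
    using Fm by (simp add: measurable_def space_pair_measure sets_pair_measure)
  have gi1: "integrable ?P1 g" using gi g Zm by (simp add: integrable_distr_eq)
  have fi2: "integrable ?P2 f" using fi f Um by (simp add: integrable_distr_eq)
  have intP: "integrable (?P1 \<Otimes>\<^sub>M ?P2) (\<lambda>p. g (fst p) * f (snd p))"
  proof (rule PP.Fubini_integrable[OF Fm2])
    show "integrable ?P1 (\<lambda>x. \<integral>y. norm (g (fst (x, y)) * f (snd (x, y))) \<partial>?P2)"
      using gi1 fi2 by (simp add: abs_mult)
    show "AE x in ?P1. integrable ?P2 (\<lambda>y. g (fst (x, y)) * f (snd (x, y)))"
      using fi2 by simp
  qed
  have eqP: "integral\<^sup>L (?P1 \<Otimes>\<^sub>M ?P2) (\<lambda>p. g (fst p) * f (snd p)) = integral\<^sup>L ?P1 g * integral\<^sup>L ?P2 f"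
  proof -
    have "integral\<^sup>L (?P1 \<Otimes>\<^sub>M ?P2) (\<lambda>p. g (fst p) * f (snd p)) = (\<integral>x. (\<integral>y. g x * f y \<partial>?P2) \<partial>?P1)"
      using PP.integral_fst[of "\<lambda>x y. g x * f y"] intP by (simp add: case_prod_beta')
    also have "\<dots> = integral\<^sup>L ?P1 g * integral\<^sup>L ?P2 f" by simp
    finally show ?thesis .
  qed
  show "integrable M (\<lambda>\<omega>. g (Z \<omega>) * f (U \<omega>))"
    using intP ind ZU Fm integrable_distr_eq[OF ZU Fm] by simp
  have "(\<integral>\<omega>. g (Z \<omega>) * f (U \<omega>) \<partial>M) = integral\<^sup>L (distr M (borel \<Otimes>\<^sub>M N) (\<lambda>\<omega>. (Z \<omega>, U \<omega>))) (\<lambda>p. g (fst p) * f (snd p))"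
    using integral_distr[OF ZU Fm] by simp
  also have "\<dots> = integral\<^sup>L ?P1 g * integral\<^sup>L ?P2 f" using eqP ind by simp
  also have "\<dots> = (\<integral>\<omega>. g (Z \<omega>) \<partial>M) * (\<integral>\<omega>. f (U \<omega>) \<partial>M)"
    using integral_distr[OF Zm g] integral_distr[OF Um f] by simp
  finally show "(\<integral>\<omega>. g (Z \<omega>) * f (U \<omega>) \<partial>M) = (\<integral>\<omega>. g (Z \<omega>) \<partial>M) * (\<integral>\<omega>. f (U \<omega>) \<partial>M)" .
qed

lemma vec_comp_meas: "(\<lambda>v::real^'p. v $ j) \<in> borel_measurable borel"
  by (intro borel_measurable_continuous_onI continuous_intros)

lemma inner_sum_vec: "(v::real^'p) \<bullet> z = (\<Sum>k\<in>UNIV. v $ k * z $ k)"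
  by (simp add: inner_vec_def)

locale model =
  fixes M :: "'a measure" and N :: "'u measure" and X Y zeta eta :: "'a \<Rightarrow> real"
    and Z :: "'a \<Rightarrow> real^'p" and U :: "'a \<Rightarrow> 'u" and xiY xiX :: "'u \<Rightarrow> real"
    and b c :: real and piX piY :: "real^'p"
  assumes sem: "sem_model M N X Y Z U zeta eta xiY xiX b c piX piY" and bc: "b * c = 0"
begin

lemma P: "prob_space M" using sem unfolding sem_model_def by simp

sublocale prob_space M by (rule P)

lemma Xm[measurable]: "X \<in> borel_measurable M" and Ym[measurable]: "Y \<in> borel_measurable M"
  and Zm[measurable]: "Z \<in> borel_measurable M" and Um[measurable]: "U \<in> measurable M N"
  and zm[measurable]: "zeta \<in> borel_measurable M" and em[measurable]: "eta \<in> borel_measurable M"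
  and xiYm[measurable]: "xiY \<in> borel_measurable N" and xiXm[measurable]: "xiX \<in> borel_measurable N"
  using sem unfolding sem_model_def by auto

lemma Zj_meas[measurable]: "(\<lambda>\<omega>. Z \<omega> $ j) \<in> borel_measurable M"
  using measurable_compose[OF Zm vec_comp_meas] by simp

lemma XL2: "L2 M X" and YL2: "L2 M Y" and ZL2: "L2 M (\<lambda>\<omega>. Z \<omega> $ j)"
  using sem unfolding sem_model_def L2_def by auto

lemma Zmean: "(\<integral>\<omega>. Z \<omega> $ j \<partial>M) = 0" and Xmean: "(\<integral>\<omega>. X \<omega> \<partial>M) = 0"
  using sem unfolding sem_model_def by auto

lemma innerL2: "L2 M (\<lambda>\<omega>. v \<bullet> Z \<omega>)"
proof -
  have "L2 M (\<lambda>\<omega>. \<Sum>k\<in>UNIV. v $ k * Z \<omega> $ k)"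
    by (rule L2_sum) (auto intro: L2_cmult ZL2)
  then show ?thesis by (simp add: inner_sum_vec)
qed

lemma inner_meas[measurable]: "(\<lambda>\<omega>. v \<bullet> Z \<omega>) \<in> borel_measurable M"
  using innerL2 L2_meas by blast

definition "RY \<omega> = xiY (U \<omega>) + zeta \<omega>"
definition "RX \<omega> = xiX (U \<omega>) + eta \<omega>"

lemma RYm[measurable]: "RY \<in> borel_measurable M" and RXm[measurable]: "RX \<in> borel_measurable M"
  unfolding RY_def[abs_def] RX_def[abs_def] by measurable

lemma RY_ae: "AE \<omega> in M. RY \<omega> = Y \<omega> - b * X \<omega> - piY \<bullet> Z \<omega>"
  and RX_ae: "AE \<omega> in M. RX \<omega> = X \<omega> - c * Y \<omega> - piX \<bullet> Z \<omega>"
  using sem unfolding sem_model_def RY_def RX_def by (auto elim!: AE_mp)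

lemma RYL2: "L2 M RY"
proof (rule L2_ae[OF _ RYm])
  show "L2 M (\<lambda>\<omega>. Y \<omega> - b * X \<omega> - piY \<bullet> Z \<omega>)" by (intro L2_diff L2_cmult XL2 YL2 innerL2)
  show "AE \<omega> in M. Y \<omega> - b * X \<omega> - piY \<bullet> Z \<omega> = RY \<omega>" using RY_ae by auto
qed

lemma RXL2: "L2 M RX"
proof (rule L2_ae[OF _ RXm])
  show "L2 M (\<lambda>\<omega>. X \<omega> - c * Y \<omega> - piX \<bullet> Z \<omega>)" by (intro L2_diff L2_cmult XL2 YL2 innerL2)
  show "AE \<omega> in M. X \<omega> - c * Y \<omega> - piX \<bullet> Z \<omega> = RX \<omega>" using RX_ae by auto
qed

abbreviation "KK \<equiv> borel \<Otimes>\<^sub>M borel \<Otimes>\<^sub>M N"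

lemma WYm: "(\<lambda>\<omega>. (eta \<omega>, Z \<omega>, U \<omega>)) \<in> measurable M KK" by measurable
lemma WXm: "(\<lambda>\<omega>. (zeta \<omega>, Z \<omega>, U \<omega>)) \<in> measurable M KK" by measurable

lemma ceY: "AE \<omega> in M. real_cond_exp M (vimage_algebra (space M) (\<lambda>\<omega>. (eta \<omega>, Z \<omega>, U \<omega>)) KK) zeta \<omega> = 0"
  and ceX: "AE \<omega> in M. real_cond_exp M (vimage_algebra (space M) (\<lambda>\<omega>. (zeta \<omega>, Z \<omega>, U \<omega>)) KK) eta \<omega> = 0"
  using sem unfolding sem_model_def cond_exp3_def by auto

lemma xiYi: "integrable M (\<lambda>\<omega>. xiY (U \<omega>))" and xiXi: "integrable M (\<lambda>\<omega>. xiX (U \<omega>))"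
  and zi: "integrable M zeta" and ei: "integrable M eta"
  and xiY0: "(\<integral>\<omega>. xiY (U \<omega>) \<partial>M) = 0" and xiX0: "(\<integral>\<omega>. xiX (U \<omega>) \<partial>M) = 0"
  using sem unfolding sem_model_def by auto

lemma indep: "distr M (borel \<Otimes>\<^sub>M N) (\<lambda>\<omega>. (Z \<omega>, U \<omega>)) = distr M borel Z \<Otimes>\<^sub>M distr M N U"
  using sem unfolding sem_model_def by auto

lemma xiYL2: "L2 M (\<lambda>\<omega>. xiY (U \<omega>))" and zL2: "L2 M zeta"
proof -
  have "L2 M (\<lambda>\<omega>. (\<lambda>t. xiY (snd (snd t))) (eta \<omega>, Z \<omega>, U \<omega>)) \<and> L2 M zeta"
    using cond_L2[OF P WYm ceY zi _ _ RYL2, where V = "\<lambda>t. xiY (snd (snd t))"] xiYi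
    by (simp add: RY_def)
  then show "L2 M (\<lambda>\<omega>. xiY (U \<omega>))" "L2 M zeta" by auto
qed

lemma xiXL2: "L2 M (\<lambda>\<omega>. xiX (U \<omega>))" and eL2: "L2 M eta"
proof -
  have "L2 M (\<lambda>\<omega>. (\<lambda>t. xiX (snd (snd t))) (zeta \<omega>, Z \<omega>, U \<omega>)) \<and> L2 M eta"
    using cond_L2[OF P WXm ceX ei _ _ RXL2, where V = "\<lambda>t. xiX (snd (snd t))"] xiXi
    by (simp add: RX_def)
  then show "L2 M (\<lambda>\<omega>. xiX (U \<omega>))" "L2 M eta" by auto
qed

lemma K1Y:
  fixes g :: "real^'p \<Rightarrow> real"
  assumes g[measurable]: "g \<in> borel_measurable borel" and gL: "L2 M (\<lambda>\<omega>. g (Z \<omega>))"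
  shows "integrable M (\<lambda>\<omega>. RY \<omega> * g (Z \<omega>))" "(\<integral>\<omega>. RY \<omega> * g (Z \<omega>) \<partial>M) = 0"
proof -
  have i1: "integrable M (\<lambda>\<omega>. g (Z \<omega>) * xiY (U \<omega>))" by (rule L2_prod[OF gL xiYL2])
  have i2: "integrable M (\<lambda>\<omega>. g (Z \<omega>) * zeta \<omega>)" by (rule L2_prod[OF gL zL2])
  have e1: "(\<integral>\<omega>. g (Z \<omega>) * xiY (U \<omega>) \<partial>M) = 0"
    using indep_int(2)[OF P Zm Um indep xiYm g xiYi L2_integrable[OF gL]] xiY0 by simp
  have e2: "(\<integral>\<omega>. (\<lambda>t. g (fst (snd t))) (eta \<omega>, Z \<omega>, U \<omega>) * zeta \<omega> \<partial>M) = 0"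
    by (rule cond_zero[OF P WYm ceY zm]) (use i2 in auto)
  have eq: "(\<lambda>\<omega>. RY \<omega> * g (Z \<omega>)) = (\<lambda>\<omega>. g (Z \<omega>) * xiY (U \<omega>) + g (Z \<omega>) * zeta \<omega>)"
    by (auto simp: RY_def algebra_simps)
  show "integrable M (\<lambda>\<omega>. RY \<omega> * g (Z \<omega>))" unfolding eq using i1 i2 by auto
  show "(\<integral>\<omega>. RY \<omega> * g (Z \<omega>) \<partial>M) = 0" unfolding eq using i1 i2 e1 e2 by simp
qed

lemma K1X:
  fixes g :: "real^'p \<Rightarrow> real"
  assumes g[measurable]: "g \<in> borel_measurable borel" and gL: "L2 M (\<lambda>\<omega>. g (Z \<omega>))"
  shows "integrable M (\<lambda>\<omega>. RX \<omega> * g (Z \<omega>))" "(\<integral>\<omega>. RX \<omega> * g (Z \<omega>) \<partial>M) = 0"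
proof -
  have i1: "integrable M (\<lambda>\<omega>. g (Z \<omega>) * xiX (U \<omega>))" by (rule L2_prod[OF gL xiXL2])
  have i2: "integrable M (\<lambda>\<omega>. g (Z \<omega>) * eta \<omega>)" by (rule L2_prod[OF gL eL2])
  have e1: "(\<integral>\<omega>. g (Z \<omega>) * xiX (U \<omega>) \<partial>M) = 0"
    using indep_int(2)[OF P Zm Um indep xiXm g xiXi L2_integrable[OF gL]] xiX0 by simp
  have e2: "(\<integral>\<omega>. (\<lambda>t. g (fst (snd t))) (zeta \<omega>, Z \<omega>, U \<omega>) * eta \<omega> \<partial>M) = 0"
    by (rule cond_zero[OF P WXm ceX em]) (use i2 in auto)
  have eq: "(\<lambda>\<omega>. RX \<omega> * g (Z \<omega>)) = (\<lambda>\<omega>. g (Z \<omega>) * xiX (U \<omega>) + g (Z \<omega>) * eta \<omega>)"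
    by (auto simp: RX_def algebra_simps)
  show "integrable M (\<lambda>\<omega>. RX \<omega> * g (Z \<omega>))" unfolding eq using i1 i2 by auto
  show "(\<integral>\<omega>. RX \<omega> * g (Z \<omega>) \<partial>M) = 0" unfolding eq using i1 i2 e1 e2 by simp
qed

definition "kap = (\<integral>\<omega>. xiX (U \<omega>) * xiY (U \<omega>) \<partial>M)"

lemma K2:
  fixes h :: "real^'p \<Rightarrow> real"
  assumes h[measurable]: "h \<in> borel_measurable borel" and hb: "\<And>z. \<bar>h z\<bar> \<le> B"
  shows "(\<integral>\<omega>. RX \<omega> * RY \<omega> * h (Z \<omega>) \<partial>M) = kap * (\<integral>\<omega>. h (Z \<omega>) \<partial>M)"
proof -
  have hZ: "(\<lambda>\<omega>. h (Z \<omega>)) \<in> borel_measurable M" by measurable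
  have hi: "integrable M (\<lambda>\<omega>. h (Z \<omega>))"
    using L2_integrable[OF L2_bmult[OF L2_const[where c=1] hZ hb]] by simp
  have i1: "integrable M (\<lambda>\<omega>. xiX (U \<omega>) * h (Z \<omega>) * xiY (U \<omega>))"
    by (rule L2_prod[OF L2_bmult[OF xiXL2 hZ hb] xiYL2])
  have i2: "integrable M (\<lambda>\<omega>. eta \<omega> * h (Z \<omega>) * xiY (U \<omega>))"
    by (rule L2_prod[OF L2_bmult[OF eL2 hZ hb] xiYL2])
  have i3: "integrable M (\<lambda>\<omega>. xiX (U \<omega>) * h (Z \<omega>) * zeta \<omega>)"
    by (rule L2_prod[OF L2_bmult[OF xiXL2 hZ hb] zL2])
  have i4: "integrable M (\<lambda>\<omega>. eta \<omega> * h (Z \<omega>) * zeta \<omega>)"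
    by (rule L2_prod[OF L2_bmult[OF eL2 hZ hb] zL2])
  have xx: "integrable M (\<lambda>\<omega>. xiX (U \<omega>) * xiY (U \<omega>))" by (rule L2_prod[OF xiXL2 xiYL2])
  have e1: "(\<integral>\<omega>. h (Z \<omega>) * (xiX (U \<omega>) * xiY (U \<omega>)) \<partial>M) = (\<integral>\<omega>. h (Z \<omega>) \<partial>M) * kap"
  proof -
    have fm: "(\<lambda>u. xiX u * xiY u) \<in> borel_measurable N" by measurable
    show ?thesis unfolding kap_def using indep_int(2)[OF P Zm Um indep fm h _ hi] xx by simp
  qed
  have e2: "(\<integral>\<omega>. (\<lambda>t. xiY (snd (snd t)) * h (fst (snd t))) (zeta \<omega>, Z \<omega>, U \<omega>) * eta \<omega> \<partial>M) = 0"
    by (rule cond_zero[OF P WXm ceX em]) (use i2 in \<open>auto simp: algebra_simps\<close>)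
  have e3: "(\<integral>\<omega>. (\<lambda>t. xiX (snd (snd t)) * h (fst (snd t))) (eta \<omega>, Z \<omega>, U \<omega>) * zeta \<omega> \<partial>M) = 0"
    by (rule cond_zero[OF P WYm ceY zm]) (use i3 in \<open>auto simp: algebra_simps\<close>)
  have e4: "(\<integral>\<omega>. (\<lambda>t. fst t * h (fst (snd t))) (eta \<omega>, Z \<omega>, U \<omega>) * zeta \<omega> \<partial>M) = 0"
    by (rule cond_zero[OF P WYm ceY zm]) (use i4 in \<open>auto simp: algebra_simps\<close>)
  have eq: "(\<lambda>\<omega>. RX \<omega> * RY \<omega> * h (Z \<omega>)) = (\<lambda>\<omega>. xiX (U \<omega>) * h (Z \<omega>) * xiY (U \<omega>) + eta \<omega> * h (Z \<omega>) * xiY (U \<omega>)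
      + xiX (U \<omega>) * h (Z \<omega>) * zeta \<omega> + eta \<omega> * h (Z \<omega>) * zeta \<omega>)"
    by (auto simp: RX_def RY_def algebra_simps)
  have "(\<integral>\<omega>. RX \<omega> * RY \<omega> * h (Z \<omega>) \<partial>M) = (\<integral>\<omega>. xiX (U \<omega>) * h (Z \<omega>) * xiY (U \<omega>) \<partial>M) + (\<integral>\<omega>. eta \<omega> * h (Z \<omega>) * xiY (U \<omega>) \<partial>M)
      + (\<integral>\<omega>. xiX (U \<omega>) * h (Z \<omega>) * zeta \<omega> \<partial>M) + (\<integral>\<omega>. eta \<omega> * h (Z \<omega>) * zeta \<omega> \<partial>M)"
    unfolding eq using i1 i2 i3 i4 by simp
  also have "\<dots> = (\<integral>\<omega>. h (Z \<omega>) \<partial>M) * kap"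
    using e1 e2 e3 e4 by (simp add: algebra_simps)
  finally show ?thesis by simp
qed

end

lemma cov_zero_gen:
  fixes Z :: "'a \<Rightarrow> real^'p" and W R :: "'a \<Rightarrow> real"
  assumes P: "prob_space M" and Zm[measurable]: "Z \<in> borel_measurable M"
    and Zi: "\<And>j. integrable M (\<lambda>\<omega>. Z \<omega> $ j)" and Z0: "\<And>j. (\<integral>\<omega>. Z \<omega> $ j \<partial>M) = 0"
    and Wm[measurable]: "W \<in> borel_measurable M" and Rm[measurable]: "R \<in> borel_measurable M"
    and H: "\<And>h. h \<in> borel_measurable borel \<Longrightarrow> (\<exists>B. \<forall>z. \<bar>h z\<bar> \<le> B) \<Longrightarrow>
              (\<integral>\<omega>. W \<omega> * R \<omega> * h (Z \<omega>) \<partial>M) = \<kappa> * (\<integral>\<omega>. h (Z \<omega>) \<partial>M)"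
  shows "cov_vec M (\<lambda>\<omega>. W \<omega> * R \<omega>) Z = 0"
proof -
  have main: "(\<integral>\<omega>. W \<omega> * R \<omega> * Z \<omega> $ j \<partial>M) = 0" for j
  proof (cases "integrable M (\<lambda>\<omega>. W \<omega> * R \<omega> * Z \<omega> $ j)")
    case False then show ?thesis by (simp add: not_integrable_integral_eq)
  next
    case True
    note vec_comp_meas[measurable]
    have Zjm[measurable]: "(\<lambda>\<omega>. Z \<omega> $ j) \<in> borel_measurable M" by measurable
    define hn where "hn n z = (if \<bar>z $ j\<bar> \<le> real n then z $ j else 0)" for n :: nat and z :: "real^'p"
    have hm[measurable]: "hn n \<in> borel_measurable borel" for n unfolding hn_def by measurable
    have hb: "\<bar>hn n z\<bar> \<le> real n" for n z unfolding hn_def by auto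
    have hle: "\<bar>hn n z\<bar> \<le> \<bar>z $ j\<bar>" for n z unfolding hn_def by auto
    have ev: "(\<lambda>n. hn n z) \<longlonglongrightarrow> z $ j" for z
    proof (rule tendsto_eventually)
      obtain n0 :: nat where "\<bar>z $ j\<bar> \<le> real n0" using real_arch_simple by blast
      then show "eventually (\<lambda>n. hn n z = z $ j) sequentially"
        unfolding eventually_sequentially hn_def
        by (intro exI[of _ n0]) (auto intro: order_trans)
    qed
    have lim1: "(\<lambda>n. \<integral>\<omega>. W \<omega> * R \<omega> * hn n (Z \<omega>) \<partial>M) \<longlonglongrightarrow> (\<integral>\<omega>. W \<omega> * R \<omega> * Z \<omega> $ j \<partial>M)"
    proof (rule integral_dominated_convergence[where w = "\<lambda>\<omega>. \<bar>W \<omega> * R \<omega> * Z \<omega> $ j\<bar>"])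
      show "integrable M (\<lambda>\<omega>. \<bar>W \<omega> * R \<omega> * Z \<omega> $ j\<bar>)" using True by auto
      show "AE \<omega> in M. (\<lambda>n. W \<omega> * R \<omega> * hn n (Z \<omega>)) \<longlonglongrightarrow> W \<omega> * R \<omega> * Z \<omega> $ j"
        by (intro AE_I2 tendsto_mult_left ev)
      show "AE \<omega> in M. norm (W \<omega> * R \<omega> * hn n (Z \<omega>)) \<le> \<bar>W \<omega> * R \<omega> * Z \<omega> $ j\<bar>" for n
        by (intro AE_I2) (simp add: abs_mult mult_left_mono hle)
    qed measurable
    have lim2: "(\<lambda>n. \<integral>\<omega>. hn n (Z \<omega>) \<partial>M) \<longlonglongrightarrow> (\<integral>\<omega>. Z \<omega> $ j \<partial>M)"
    proof (rule integral_dominated_convergence[where w = "\<lambda>\<omega>. \<bar>Z \<omega> $ j\<bar>"])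
      show "integrable M (\<lambda>\<omega>. \<bar>Z \<omega> $ j\<bar>)" using Zi by auto
      show "AE \<omega> in M. (\<lambda>n. hn n (Z \<omega>)) \<longlonglongrightarrow> Z \<omega> $ j"
        by (intro AE_I2 ev)
      show "AE \<omega> in M. norm (hn n (Z \<omega>)) \<le> \<bar>Z \<omega> $ j\<bar>" for n
        by (intro AE_I2) (simp add: hle)
    qed measurable
    have eq: "(\<integral>\<omega>. W \<omega> * R \<omega> * hn n (Z \<omega>) \<partial>M) = \<kappa> * (\<integral>\<omega>. hn n (Z \<omega>) \<partial>M)" for n
      using H[OF hm] hb by blast
    have "(\<lambda>n. \<integral>\<omega>. W \<omega> * R \<omega> * hn n (Z \<omega>) \<partial>M) \<longlonglongrightarrow> \<kappa> * (\<integral>\<omega>. Z \<omega> $ j \<partial>M)"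
      unfolding eq by (intro tendsto_mult_left lim2)
    then have "(\<lambda>n. \<integral>\<omega>. W \<omega> * R \<omega> * hn n (Z \<omega>) \<partial>M) \<longlonglongrightarrow> 0" using Z0 by simp
    then show ?thesis using lim1 LIMSEQ_unique by blast
  qed
  show ?thesis unfolding cov_vec_def using main Z0 by (simp add: vec_eq_iff)
qed

definition zc :: "'a measure \<Rightarrow> ('a \<Rightarrow> real) \<Rightarrow> ('a \<Rightarrow> real) \<Rightarrow> ('a \<Rightarrow> real^'p) \<Rightarrow> real^'p \<Rightarrow> real^'p
    \<Rightarrow> real \<Rightarrow> real \<Rightarrow> real \<Rightarrow> bool" where
  "zc M X Y Z gX gY \<alpha> \<beta> \<gamma> \<longleftrightarrow> (\<exists>\<kappa>. \<forall>h::real^'p \<Rightarrow> real. h \<in> borel_measurable borel \<longrightarrow> (\<exists>B. \<forall>z. \<bar>h z\<bar> \<le> B) \<longrightarrow>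
     \<alpha> * (\<integral>\<omega>. (X \<omega> - gX \<bullet> Z \<omega>)\<^sup>2 * h (Z \<omega>) \<partial>M)
     + \<beta> * (\<integral>\<omega>. (X \<omega> - gX \<bullet> Z \<omega>) * (Y \<omega> - gY \<bullet> Z \<omega>) * h (Z \<omega>) \<partial>M)
     + \<gamma> * (\<integral>\<omega>. (Y \<omega> - gY \<bullet> Z \<omega>)\<^sup>2 * h (Z \<omega>) \<partial>M) = \<kappa> * (\<integral>\<omega>. h (Z \<omega>) \<partial>M))"

context model
begin

abbreviation "gX \<equiv> gammaX b c piX piY"
abbreviation "gY \<equiv> gammaY b c piX piY"

lemma piX_eq: "piX = gX - c *\<^sub>R gY" and piY_eq: "piY = gY - b *\<^sub>R gX"
proof -
  have cb: "c * b = 0" using bc by (simp add: mult.commute)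
  show "piX = gX - c *\<^sub>R gY"
    unfolding gammaX_def gammaY_def using bc by (cases "b = 0") (simp_all add: vec_eq_iff algebra_simps)
  show "piY = gY - b *\<^sub>R gX"
    unfolding gammaX_def gammaY_def using bc by (cases "b = 0") (simp_all add: vec_eq_iff algebra_simps)
qed

definition "eX \<omega> = X \<omega> - gX \<bullet> Z \<omega>"
definition "eY \<omega> = Y \<omega> - gY \<bullet> Z \<omega>"

lemma eXm[measurable]: "eX \<in> borel_measurable M" and eYm[measurable]: "eY \<in> borel_measurable M"
  unfolding eX_def[abs_def] eY_def[abs_def] by measurable

lemma eXL2: "L2 M eX" and eYL2: "L2 M eY"
  unfolding eX_def[abs_def] eY_def[abs_def] by (intro L2_diff XL2 YL2 innerL2)+

lemma inner_piX: "piX \<bullet> z = gX \<bullet> z - c * (gY \<bullet> z)"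
proof -
  have "piX \<bullet> z = (gX - c *\<^sub>R gY) \<bullet> z" by (rule arg_cong[where f = "\<lambda>v. v \<bullet> z"], rule piX_eq)
  then show ?thesis by (simp only: inner_diff_left inner_scaleR_left)
qed

lemma inner_piY: "piY \<bullet> z = gY \<bullet> z - b * (gX \<bullet> z)"
proof -
  have "piY \<bullet> z = (gY - b *\<^sub>R gX) \<bullet> z" by (rule arg_cong[where f = "\<lambda>v. v \<bullet> z"], rule piY_eq)
  then show ?thesis by (simp only: inner_diff_left inner_scaleR_left)
qed

lemma RX_e: "AE \<omega> in M. RX \<omega> = eX \<omega> - c * eY \<omega>"
  using RX_ae by eventually_elim (simp only: eX_def eY_def inner_piX, simp add: algebra_simps)

lemma RY_e: "AE \<omega> in M. RY \<omega> = eY \<omega> - b * eX \<omega>"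
  using RY_ae by eventually_elim (simp only: eX_def eY_def inner_piY, simp add: algebra_simps)

lemma eX_R: "AE \<omega> in M. eX \<omega> = RX \<omega> + c * RY \<omega>"
  using RX_e RY_e
proof eventually_elim
  case (elim \<omega>)
  have "RX \<omega> + c * RY \<omega> = eX \<omega> - (b * c) * eX \<omega>" unfolding elim by (simp add: algebra_simps)
  then show ?case using bc by simp
qed

lemma eY_R: "AE \<omega> in M. eY \<omega> = RY \<omega> + b * RX \<omega>"
  using RX_e RY_e
proof eventually_elim
  case (elim \<omega>)
  have "RY \<omega> + b * RX \<omega> = eY \<omega> - (b * c) * eY \<omega>" unfolding elim by (simp add: algebra_simps)
  then show ?case using bc by simp
qed

lemma Zorth_gen:
  assumes eR: "AE \<omega> in M. e \<omega> = RX \<omega> * s + t * RY \<omega>" and em: "e \<in> borel_measurable M"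
  shows "(\<integral>\<omega>. Z \<omega> $ j * e \<omega> \<partial>M) = 0"
proof -
  note vec_comp_meas[measurable]
  have g: "(\<lambda>z::real^'p. z $ j) \<in> borel_measurable borel" by measurable
  have a: "integrable M (\<lambda>\<omega>. RX \<omega> * Z \<omega> $ j)" "(\<integral>\<omega>. RX \<omega> * Z \<omega> $ j \<partial>M) = 0"
    using K1X[OF g] ZL2 by auto
  have b: "integrable M (\<lambda>\<omega>. RY \<omega> * Z \<omega> $ j)" "(\<integral>\<omega>. RY \<omega> * Z \<omega> $ j \<partial>M) = 0"
    using K1Y[OF g] ZL2 by auto
  have "(\<integral>\<omega>. Z \<omega> $ j * e \<omega> \<partial>M) = (\<integral>\<omega>. s * (RX \<omega> * Z \<omega> $ j) + t * (RY \<omega> * Z \<omega> $ j) \<partial>M)"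
    by (rule integral_cong_AE) (use eR em in \<open>auto simp: algebra_simps elim: AE_mp\<close>)
  also have "\<dots> = 0" using a b by simp
  finally show ?thesis .
qed

lemma ZorthX: "(\<integral>\<omega>. Z \<omega> $ j * (X \<omega> - gX \<bullet> Z \<omega>) \<partial>M) = 0"
  using Zorth_gen[of "eX" 1 c j] eX_R by (simp add: eX_def[abs_def])

lemma ZorthY: "(\<integral>\<omega>. Z \<omega> $ j * (Y \<omega> - gY \<bullet> Z \<omega>) \<partial>M) = 0"
proof -
  have "AE \<omega> in M. eY \<omega> = RX \<omega> * b + 1 * RY \<omega>" using eY_R by eventually_elim (simp add: algebra_simps)
  then show ?thesis using Zorth_gen[of "eY" b 1 j] by (simp add: eY_def[abs_def])
qed

lemma hprod_int:
  assumes "L2 M f" "L2 M g" "h \<in> borel_measurable borel" "\<And>z. \<bar>h z\<bar> \<le> B"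
  shows "integrable M (\<lambda>\<omega>. f \<omega> * g \<omega> * h (Z \<omega>))"
proof -
  have hZ: "(\<lambda>\<omega>. h (Z \<omega>)) \<in> borel_measurable M" using assms(3) by measurable
  show ?thesis using L2_prod[OF assms(1) L2_bmult[OF assms(2) hZ assms(4)]] by (simp add: mult.assoc)
qed

lemma zc_model: "zc M X Y Z gX gY (-b) 1 (-c)"
  unfolding zc_def
proof (intro exI[of _ kap] allI impI)
  fix h :: "real^'p \<Rightarrow> real"
  assume h[measurable]: "h \<in> borel_measurable borel" and "\<exists>B. \<forall>z. \<bar>h z\<bar> \<le> B"
  then obtain B where hb: "\<And>z. \<bar>h z\<bar> \<le> B" by auto
  have i1: "integrable M (\<lambda>\<omega>. eX \<omega> * eX \<omega> * h (Z \<omega>))" by (rule hprod_int[OF eXL2 eXL2 h hb])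
  have i2: "integrable M (\<lambda>\<omega>. eX \<omega> * eY \<omega> * h (Z \<omega>))" by (rule hprod_int[OF eXL2 eYL2 h hb])
  have i3: "integrable M (\<lambda>\<omega>. eY \<omega> * eY \<omega> * h (Z \<omega>))" by (rule hprod_int[OF eYL2 eYL2 h hb])
  have "(\<integral>\<omega>. RX \<omega> * RY \<omega> * h (Z \<omega>) \<partial>M) =
      (\<integral>\<omega>. (-b) * (eX \<omega> * eX \<omega> * h (Z \<omega>)) + (eX \<omega> * eY \<omega> * h (Z \<omega>)) + (-c) * (eY \<omega> * eY \<omega> * h (Z \<omega>)) \<partial>M)"
  proof (rule integral_cong_AE)
    show "AE \<omega> in M. RX \<omega> * RY \<omega> * h (Z \<omega>) = (-b) * (eX \<omega> * eX \<omega> * h (Z \<omega>)) + (eX \<omega> * eY \<omega> * h (Z \<omega>)) + (-c) * (eY \<omega> * eY \<omega> * h (Z \<omega>))"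
      using RX_e RY_e
    proof eventually_elim
      case (elim \<omega>)
      have e0: "RX \<omega> * RY \<omega> = (-b) * (eX \<omega> * eX \<omega>) + eX \<omega> * eY \<omega> + (-c) * (eY \<omega> * eY \<omega>) + (b * c) * (eX \<omega> * eY \<omega>)"
        unfolding elim by (simp add: algebra_simps)
      have e: "RX \<omega> * RY \<omega> = (-b) * (eX \<omega> * eX \<omega>) + eX \<omega> * eY \<omega> + (-c) * (eY \<omega> * eY \<omega>)"
        using e0 bc by simp
      show ?case by (simp only: e) (simp add: algebra_simps)
    qed
  qed measurable
  also have "\<dots> = (-b) * (\<integral>\<omega>. eX \<omega> * eX \<omega> * h (Z \<omega>) \<partial>M) + (\<integral>\<omega>. eX \<omega> * eY \<omega> * h (Z \<omega>) \<partial>M) + (-c) * (\<integral>\<omega>. eY \<omega> * eY \<omega> * h (Z \<omega>) \<partial>M)"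
    using i1 i2 i3 by simp
  finally have "(-b) * (\<integral>\<omega>. eX \<omega> * eX \<omega> * h (Z \<omega>) \<partial>M) + (\<integral>\<omega>. eX \<omega> * eY \<omega> * h (Z \<omega>) \<partial>M) + (-c) * (\<integral>\<omega>. eY \<omega> * eY \<omega> * h (Z \<omega>) \<partial>M)
      = kap * (\<integral>\<omega>. h (Z \<omega>) \<partial>M)" using K2[OF h hb] by simp
  then show "- b * (\<integral>\<omega>. (X \<omega> - gX \<bullet> Z \<omega>)\<^sup>2 * h (Z \<omega>) \<partial>M) +
         1 * (\<integral>\<omega>. (X \<omega> - gX \<bullet> Z \<omega>) * (Y \<omega> - gY \<bullet> Z \<omega>) * h (Z \<omega>) \<partial>M) +
         - c * (\<integral>\<omega>. (Y \<omega> - gY \<bullet> Z \<omega>)\<^sup>2 * h (Z \<omega>) \<partial>M) = kap * (\<integral>\<omega>. h (Z \<omega>) \<partial>M)"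
    by (simp add: eX_def eY_def power2_eq_square)
qed

lemma covY:
  assumes "zc M X Y Z gX gY 0 (-b) 1"
  shows "cov_vec M (\<lambda>\<omega>. Y \<omega> * (xiY (U \<omega>) + zeta \<omega>)) Z = 0"
proof -
  obtain \<kappa> where K: "\<And>h. h \<in> borel_measurable borel \<Longrightarrow> (\<exists>B. \<forall>z. \<bar>h z\<bar> \<le> B) \<Longrightarrow>
     (-b) * (\<integral>\<omega>. (X \<omega> - gX \<bullet> Z \<omega>) * (Y \<omega> - gY \<bullet> Z \<omega>) * h (Z \<omega>) \<partial>M)
     + (\<integral>\<omega>. (Y \<omega> - gY \<bullet> Z \<omega>)\<^sup>2 * h (Z \<omega>) \<partial>M) = \<kappa> * (\<integral>\<omega>. h (Z \<omega>) \<partial>M)"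
    using assms unfolding zc_def by auto
  have "cov_vec M (\<lambda>\<omega>. Y \<omega> * RY \<omega>) Z = 0"
  proof (rule cov_zero_gen[OF P Zm _ Zmean Ym RYm])
    show "integrable M (\<lambda>\<omega>. Z \<omega> $ j)" for j using L2_integrable[OF ZL2] .
    fix h :: "real^'p \<Rightarrow> real"
    assume h[measurable]: "h \<in> borel_measurable borel" and "\<exists>B. \<forall>z. \<bar>h z\<bar> \<le> B"
    then obtain B where hb: "\<And>z. \<bar>h z\<bar> \<le> B" by auto
    have hZ: "(\<lambda>\<omega>. h (Z \<omega>)) \<in> borel_measurable M" by measurable
    have gm: "(\<lambda>z. gY \<bullet> z * h z) \<in> borel_measurable borel" by measurable
    have gL: "L2 M (\<lambda>\<omega>. gY \<bullet> Z \<omega> * h (Z \<omega>))" by (rule L2_bmult[OF innerL2 hZ hb])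
    have k1: "integrable M (\<lambda>\<omega>. RY \<omega> * (gY \<bullet> Z \<omega> * h (Z \<omega>)))" "(\<integral>\<omega>. RY \<omega> * (gY \<bullet> Z \<omega> * h (Z \<omega>)) \<partial>M) = 0"
      using K1Y[OF gm] gL by auto
    have i2: "integrable M (\<lambda>\<omega>. eX \<omega> * eY \<omega> * h (Z \<omega>))" by (rule hprod_int[OF eXL2 eYL2 h hb])
    have i3: "integrable M (\<lambda>\<omega>. eY \<omega> * eY \<omega> * h (Z \<omega>))" by (rule hprod_int[OF eYL2 eYL2 h hb])
    have "(\<integral>\<omega>. Y \<omega> * RY \<omega> * h (Z \<omega>) \<partial>M) =
        (\<integral>\<omega>. RY \<omega> * (gY \<bullet> Z \<omega> * h (Z \<omega>)) + (-b) * (eX \<omega> * eY \<omega> * h (Z \<omega>)) + eY \<omega> * eY \<omega> * h (Z \<omega>) \<partial>M)"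
    proof (rule integral_cong_AE)
      show "AE \<omega> in M. Y \<omega> * RY \<omega> * h (Z \<omega>) = RY \<omega> * (gY \<bullet> Z \<omega> * h (Z \<omega>)) + (-b) * (eX \<omega> * eY \<omega> * h (Z \<omega>)) + eY \<omega> * eY \<omega> * h (Z \<omega>)"
        using RY_e
      proof eventually_elim
        case (elim \<omega>)
        have Y: "Y \<omega> = gY \<bullet> Z \<omega> + eY \<omega>" by (simp add: eY_def)
        show ?case unfolding Y elim by (simp add: algebra_simps)
      qed
    qed measurable
    also have "\<dots> = (-b) * (\<integral>\<omega>. eX \<omega> * eY \<omega> * h (Z \<omega>) \<partial>M) + (\<integral>\<omega>. eY \<omega> * eY \<omega> * h (Z \<omega>) \<partial>M)"
      using k1 i2 i3 by simp
    also have "\<dots> = \<kappa> * (\<integral>\<omega>. h (Z \<omega>) \<partial>M)"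
      using K[OF h] hb by (auto simp: eX_def eY_def power2_eq_square)
    finally show "(\<integral>\<omega>. Y \<omega> * RY \<omega> * h (Z \<omega>) \<partial>M) = \<kappa> * (\<integral>\<omega>. h (Z \<omega>) \<partial>M)" .
  qed
  then show ?thesis by (simp add: RY_def[abs_def])
qed

lemma covX:
  assumes "zc M X Y Z gX gY 1 (-c) 0"
  shows "cov_vec M (\<lambda>\<omega>. X \<omega> * (xiX (U \<omega>) + eta \<omega>)) Z = 0"
proof -
  obtain \<kappa> where K: "\<And>h. h \<in> borel_measurable borel \<Longrightarrow> (\<exists>B. \<forall>z. \<bar>h z\<bar> \<le> B) \<Longrightarrow>
     (\<integral>\<omega>. (X \<omega> - gX \<bullet> Z \<omega>)\<^sup>2 * h (Z \<omega>) \<partial>M)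
     + (-c) * (\<integral>\<omega>. (X \<omega> - gX \<bullet> Z \<omega>) * (Y \<omega> - gY \<bullet> Z \<omega>) * h (Z \<omega>) \<partial>M) = \<kappa> * (\<integral>\<omega>. h (Z \<omega>) \<partial>M)"
    using assms unfolding zc_def by auto
  have "cov_vec M (\<lambda>\<omega>. X \<omega> * RX \<omega>) Z = 0"
  proof (rule cov_zero_gen[OF P Zm _ Zmean Xm RXm])
    show "integrable M (\<lambda>\<omega>. Z \<omega> $ j)" for j using L2_integrable[OF ZL2] .
    fix h :: "real^'p \<Rightarrow> real"
    assume h[measurable]: "h \<in> borel_measurable borel" and "\<exists>B. \<forall>z. \<bar>h z\<bar> \<le> B"
    then obtain B where hb: "\<And>z. \<bar>h z\<bar> \<le> B" by auto
    have hZ: "(\<lambda>\<omega>. h (Z \<omega>)) \<in> borel_measurable M" by measurable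
    have gm: "(\<lambda>z. gX \<bullet> z * h z) \<in> borel_measurable borel" by measurable
    have gL: "L2 M (\<lambda>\<omega>. gX \<bullet> Z \<omega> * h (Z \<omega>))" by (rule L2_bmult[OF innerL2 hZ hb])
    have k1: "integrable M (\<lambda>\<omega>. RX \<omega> * (gX \<bullet> Z \<omega> * h (Z \<omega>)))" "(\<integral>\<omega>. RX \<omega> * (gX \<bullet> Z \<omega> * h (Z \<omega>)) \<partial>M) = 0"
      using K1X[OF gm] gL by auto
    have i2: "integrable M (\<lambda>\<omega>. eX \<omega> * eY \<omega> * h (Z \<omega>))" by (rule hprod_int[OF eXL2 eYL2 h hb])
    have i1: "integrable M (\<lambda>\<omega>. eX \<omega> * eX \<omega> * h (Z \<omega>))" by (rule hprod_int[OF eXL2 eXL2 h hb])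
    have "(\<integral>\<omega>. X \<omega> * RX \<omega> * h (Z \<omega>) \<partial>M) =
        (\<integral>\<omega>. RX \<omega> * (gX \<bullet> Z \<omega> * h (Z \<omega>)) + eX \<omega> * eX \<omega> * h (Z \<omega>) + (-c) * (eX \<omega> * eY \<omega> * h (Z \<omega>)) \<partial>M)"
    proof (rule integral_cong_AE)
      show "AE \<omega> in M. X \<omega> * RX \<omega> * h (Z \<omega>) = RX \<omega> * (gX \<bullet> Z \<omega> * h (Z \<omega>)) + eX \<omega> * eX \<omega> * h (Z \<omega>) + (-c) * (eX \<omega> * eY \<omega> * h (Z \<omega>))"
        using RX_e
      proof eventually_elim
        case (elim \<omega>)
        have X: "X \<omega> = gX \<bullet> Z \<omega> + eX \<omega>" by (simp add: eX_def)
        show ?case unfolding X elim by (simp add: algebra_simps)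
      qed
    qed measurable
    also have "\<dots> = (\<integral>\<omega>. eX \<omega> * eX \<omega> * h (Z \<omega>) \<partial>M) + (-c) * (\<integral>\<omega>. eX \<omega> * eY \<omega> * h (Z \<omega>) \<partial>M)"
      using k1 i2 i1 by simp
    also have "\<dots> = \<kappa> * (\<integral>\<omega>. h (Z \<omega>) \<partial>M)"
      using K[OF h] hb by (auto simp: eX_def eY_def power2_eq_square)
    finally show "(\<integral>\<omega>. X \<omega> * RX \<omega> * h (Z \<omega>) \<partial>M) = \<kappa> * (\<integral>\<omega>. h (Z \<omega>) \<partial>M)" .
  qed
  then show ?thesis by (simp add: RX_def[abs_def])
qed

lemma Sig_inv: "invertible (\<chi> j k. \<integral>\<omega>. Z \<omega> $ j * Z \<omega> $ k \<partial>M)"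
  using sem unfolding sem_model_def by simp

lemma bounds: "\<bar>b\<bar> < 1" "\<bar>c\<bar> < 1"
  using sem spec_norm_bounds unfolding sem_model_def by auto

end

lemma zc_lin:
  fixes Z :: "'a \<Rightarrow> real^'p"
  assumes "zc M X Y Z g k a1 b1 c1" "zc M X Y Z g k a2 b2 c2"
    and "a = s * a1 + t * a2" "bb = s * b1 + t * b2" "cc = s * c1 + t * c2"
  shows "zc M X Y Z g k a bb cc"
proof -
  obtain k1 where K1: "\<forall>h::real^'p \<Rightarrow> real. h \<in> borel_measurable borel \<longrightarrow> (\<exists>B. \<forall>z. \<bar>h z\<bar> \<le> B) \<longrightarrow>
     a1 * (\<integral>\<omega>. (X \<omega> - g \<bullet> Z \<omega>)\<^sup>2 * h (Z \<omega>) \<partial>M)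
     + b1 * (\<integral>\<omega>. (X \<omega> - g \<bullet> Z \<omega>) * (Y \<omega> - k \<bullet> Z \<omega>) * h (Z \<omega>) \<partial>M)
     + c1 * (\<integral>\<omega>. (Y \<omega> - k \<bullet> Z \<omega>)\<^sup>2 * h (Z \<omega>) \<partial>M) = k1 * (\<integral>\<omega>. h (Z \<omega>) \<partial>M)"
    using assms(1) unfolding zc_def by blast
  obtain k2 where K2: "\<forall>h::real^'p \<Rightarrow> real. h \<in> borel_measurable borel \<longrightarrow> (\<exists>B. \<forall>z. \<bar>h z\<bar> \<le> B) \<longrightarrow>
     a2 * (\<integral>\<omega>. (X \<omega> - g \<bullet> Z \<omega>)\<^sup>2 * h (Z \<omega>) \<partial>M)
     + b2 * (\<integral>\<omega>. (X \<omega> - g \<bullet> Z \<omega>) * (Y \<omega> - k \<bullet> Z \<omega>) * h (Z \<omega>) \<partial>M)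
     + c2 * (\<integral>\<omega>. (Y \<omega> - k \<bullet> Z \<omega>)\<^sup>2 * h (Z \<omega>) \<partial>M) = k2 * (\<integral>\<omega>. h (Z \<omega>) \<partial>M)"
    using assms(2) unfolding zc_def by blast
  show ?thesis unfolding zc_def
  proof (intro exI[of _ "s * k1 + t * k2"] allI impI)
    fix h :: "real^'p \<Rightarrow> real"
    assume h: "h \<in> borel_measurable borel" "\<exists>B. \<forall>z. \<bar>h z\<bar> \<le> B"
    define I1 where "I1 = (\<integral>\<omega>. (X \<omega> - g \<bullet> Z \<omega>)\<^sup>2 * h (Z \<omega>) \<partial>M)"
    define I2 where "I2 = (\<integral>\<omega>. (X \<omega> - g \<bullet> Z \<omega>) * (Y \<omega> - k \<bullet> Z \<omega>) * h (Z \<omega>) \<partial>M)"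
    define I3 where "I3 = (\<integral>\<omega>. (Y \<omega> - k \<bullet> Z \<omega>)\<^sup>2 * h (Z \<omega>) \<partial>M)"
    define H where "H = (\<integral>\<omega>. h (Z \<omega>) \<partial>M)"
    have e1: "a1 * I1 + b1 * I2 + c1 * I3 = k1 * H" using K1 h unfolding I1_def I2_def I3_def H_def by blast
    have e2: "a2 * I1 + b2 * I2 + c2 * I3 = k2 * H" using K2 h unfolding I1_def I2_def I3_def H_def by blast
    have "a * I1 + bb * I2 + cc * I3 = s * (a1 * I1 + b1 * I2 + c1 * I3) + t * (a2 * I1 + b2 * I2 + c2 * I3)"
      using assms(3-5) by (simp add: algebra_simps)
    also have "\<dots> = (s * k1 + t * k2) * H" using e1 e2 by (simp add: algebra_simps)
    finally show "a * I1 + bb * I2 + cc * I3 = (s * k1 + t * k2) * H" .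
  qed
qed

lemma int_transfer:
  fixes X1 Y1 :: "'a \<Rightarrow> real" and Z1 :: "'a \<Rightarrow> real^'p"
    and X2 Y2 :: "'b \<Rightarrow> real" and Z2 :: "'b \<Rightarrow> real^'p"
  assumes D: "distr M1 (borel \<Otimes>\<^sub>M borel \<Otimes>\<^sub>M borel) (\<lambda>\<omega>. (X1 \<omega>, Y1 \<omega>, Z1 \<omega>))
       = distr M2 (borel \<Otimes>\<^sub>M borel \<Otimes>\<^sub>M borel) (\<lambda>\<omega>. (X2 \<omega>, Y2 \<omega>, Z2 \<omega>))"
    and m1: "(\<lambda>\<omega>. (X1 \<omega>, Y1 \<omega>, Z1 \<omega>)) \<in> measurable M1 (borel \<Otimes>\<^sub>M borel \<Otimes>\<^sub>M borel)"
    and m2: "(\<lambda>\<omega>. (X2 \<omega>, Y2 \<omega>, Z2 \<omega>)) \<in> measurable M2 (borel \<Otimes>\<^sub>M borel \<Otimes>\<^sub>M borel)"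
    and F: "(F :: real \<times> real \<times> (real^'p) \<Rightarrow> real) \<in> borel_measurable (borel \<Otimes>\<^sub>M borel \<Otimes>\<^sub>M borel)"
  shows "(\<integral>\<omega>. F (X1 \<omega>, Y1 \<omega>, Z1 \<omega>) \<partial>M1) = (\<integral>\<omega>. F (X2 \<omega>, Y2 \<omega>, Z2 \<omega>) \<partial>M2)"
  using integral_distr[OF m1 F] integral_distr[OF m2 F] D by simp

lemma zc_transfer:
  fixes X1 Y1 :: "'a \<Rightarrow> real" and Z1 :: "'a \<Rightarrow> real^'p"
    and X2 Y2 :: "'b \<Rightarrow> real" and Z2 :: "'b \<Rightarrow> real^'p"
  assumes D: "distr M1 (borel \<Otimes>\<^sub>M borel \<Otimes>\<^sub>M borel) (\<lambda>\<omega>. (X1 \<omega>, Y1 \<omega>, Z1 \<omega>))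
       = distr M2 (borel \<Otimes>\<^sub>M borel \<Otimes>\<^sub>M borel) (\<lambda>\<omega>. (X2 \<omega>, Y2 \<omega>, Z2 \<omega>))"
    and m1: "(\<lambda>\<omega>. (X1 \<omega>, Y1 \<omega>, Z1 \<omega>)) \<in> measurable M1 (borel \<Otimes>\<^sub>M borel \<Otimes>\<^sub>M borel)"
    and m2: "(\<lambda>\<omega>. (X2 \<omega>, Y2 \<omega>, Z2 \<omega>)) \<in> measurable M2 (borel \<Otimes>\<^sub>M borel \<Otimes>\<^sub>M borel)"
  shows "zc M1 X1 Y1 Z1 g k a bb cc \<longleftrightarrow> zc M2 X2 Y2 Z2 g k a bb cc"
proof -
  have T: "(\<integral>\<omega>. F (X1 \<omega>, Y1 \<omega>, Z1 \<omega>) \<partial>M1) = (\<integral>\<omega>. F (X2 \<omega>, Y2 \<omega>, Z2 \<omega>) \<partial>M2)"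
    if "F \<in> borel_measurable (borel \<Otimes>\<^sub>M borel \<Otimes>\<^sub>M borel)" for F :: "real \<times> real \<times> (real^'p) \<Rightarrow> real"
    by (rule int_transfer[OF D m1 m2 that])
  have E: "\<And>h::real^'p \<Rightarrow> real. h \<in> borel_measurable borel \<Longrightarrow>
      (\<integral>\<omega>. (X1 \<omega> - g \<bullet> Z1 \<omega>)\<^sup>2 * h (Z1 \<omega>) \<partial>M1) = (\<integral>\<omega>. (X2 \<omega> - g \<bullet> Z2 \<omega>)\<^sup>2 * h (Z2 \<omega>) \<partial>M2) \<and>
      (\<integral>\<omega>. (X1 \<omega> - g \<bullet> Z1 \<omega>) * (Y1 \<omega> - k \<bullet> Z1 \<omega>) * h (Z1 \<omega>) \<partial>M1) = (\<integral>\<omega>. (X2 \<omega> - g \<bullet> Z2 \<omega>) * (Y2 \<omega> - k \<bullet> Z2 \<omega>) * h (Z2 \<omega>) \<partial>M2) \<and>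
      (\<integral>\<omega>. (Y1 \<omega> - k \<bullet> Z1 \<omega>)\<^sup>2 * h (Z1 \<omega>) \<partial>M1) = (\<integral>\<omega>. (Y2 \<omega> - k \<bullet> Z2 \<omega>)\<^sup>2 * h (Z2 \<omega>) \<partial>M2) \<and>
      (\<integral>\<omega>. h (Z1 \<omega>) \<partial>M1) = (\<integral>\<omega>. h (Z2 \<omega>) \<partial>M2)"
  proof -
    fix h :: "real^'p \<Rightarrow> real" assume h[measurable]: "h \<in> borel_measurable borel"
    have f1: "(\<lambda>p::real \<times> real \<times> (real^'p). (fst p - g \<bullet> snd (snd p))\<^sup>2 * h (snd (snd p))) \<in> borel_measurable (borel \<Otimes>\<^sub>M borel \<Otimes>\<^sub>M borel)" by measurable
    have f2: "(\<lambda>p::real \<times> real \<times> (real^'p). (fst p - g \<bullet> snd (snd p)) * (fst (snd p) - k \<bullet> snd (snd p)) * h (snd (snd p))) \<in> borel_measurable (borel \<Otimes>\<^sub>M borel \<Otimes>\<^sub>M borel)" by measurable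
    have f3: "(\<lambda>p::real \<times> real \<times> (real^'p). (fst (snd p) - k \<bullet> snd (snd p))\<^sup>2 * h (snd (snd p))) \<in> borel_measurable (borel \<Otimes>\<^sub>M borel \<Otimes>\<^sub>M borel)" by measurable
    have f4: "(\<lambda>p::real \<times> real \<times> (real^'p). h (snd (snd p))) \<in> borel_measurable (borel \<Otimes>\<^sub>M borel \<Otimes>\<^sub>M borel)" by measurable
    show "?thesis h" using T[OF f1] T[OF f2] T[OF f3] T[OF f4] by simp
  qed
  show ?thesis unfolding zc_def using E by (intro ex_cong1 all_cong1 imp_cong refl) (metis (no_types, lifting))
qed

context model begin

lemma gam_unique:
  assumes W: "L2 M W" and v: "\<And>j. (\<integral>\<omega>. Z \<omega> $ j * (W \<omega> - v \<bullet> Z \<omega>) \<partial>M) = 0"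
    and u: "\<And>j. (\<integral>\<omega>. Z \<omega> $ j * (W \<omega> - u \<bullet> Z \<omega>) \<partial>M) = 0"
  shows "v = u"
proof -
  define w where "w = u - v"
  let ?S = "\<chi> j k. \<integral>\<omega>. Z \<omega> $ j * Z \<omega> $ k \<partial>M"
  have "(?S *v w) $ j = 0" for j
  proof -
    have ijk: "integrable M (\<lambda>\<omega>. Z \<omega> $ j * Z \<omega> $ k)" for k by (rule L2_prod[OF ZL2 ZL2])
    have iW: "integrable M (\<lambda>\<omega>. Z \<omega> $ j * (W \<omega> - v \<bullet> Z \<omega>))" by (rule L2_prod[OF ZL2 L2_diff[OF W innerL2]])
    have iW2: "integrable M (\<lambda>\<omega>. Z \<omega> $ j * (W \<omega> - u \<bullet> Z \<omega>))" by (rule L2_prod[OF ZL2 L2_diff[OF W innerL2]])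
    have "(?S *v w) $ j = (\<Sum>k\<in>UNIV. (\<integral>\<omega>. Z \<omega> $ j * Z \<omega> $ k \<partial>M) * w $ k)"
      by (simp add: matrix_vector_mult_def)
    also have "\<dots> = (\<integral>\<omega>. (\<Sum>k\<in>UNIV. w $ k * (Z \<omega> $ j * Z \<omega> $ k)) \<partial>M)"
      using ijk by (simp add: mult.commute)
    also have "\<dots> = (\<integral>\<omega>. Z \<omega> $ j * (W \<omega> - v \<bullet> Z \<omega>) - Z \<omega> $ j * (W \<omega> - u \<bullet> Z \<omega>) \<partial>M)"
      by (rule Bochner_Integration.integral_cong)
         (simp_all add: w_def inner_sum_vec algebra_simps sum_distrib_left sum_subtractf)
    also have "\<dots> = 0" using iW iW2 v u by simp
    finally show ?thesis .
  qed
  then have "?S *v w = ?S *v 0" by (simp add: vec_eq_iff)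
  then have "w = 0" using inj_matrix_vector_mult[OF Sig_inv] by (meson injD)
  then show ?thesis by (simp add: w_def)
qed

end

theorem theorem2:
  fixes M1 :: "'a measure" and N1 :: "'u measure"
    and X1 Y1 zeta1 eta1 :: "'a \<Rightarrow> real" and Z1 :: "'a \<Rightarrow> real^'p" and U1 :: "'a \<Rightarrow> 'u"
    and xiY1 xiX1 :: "'u \<Rightarrow> real"
    and M2 :: "'b measure" and N2 :: "'v measure"
    and X2 Y2 zeta2 eta2 :: "'b \<Rightarrow> real" and Z2 :: "'b \<Rightarrow> real^'p" and U2 :: "'b \<Rightarrow> 'v"
    and xiY2 xiX2 :: "'v \<Rightarrow> real"
    and bxy1 byx1 bxy2 byx2 :: real and piX1 piY1 piX2 piY2 :: "real^'p"
  assumes "admissible M1 N1 X1 Y1 Z1 U1 zeta1 eta1 xiY1 xiX1 bxy1 byx1 piX1 piY1"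
    and "admissible M2 N2 X2 Y2 Z2 U2 zeta2 eta2 xiY2 xiX2 bxy2 byx2 piX2 piY2"
    and "distr M1 (borel \<Otimes>\<^sub>M borel \<Otimes>\<^sub>M borel) (\<lambda>\<omega>. (X1 \<omega>, Y1 \<omega>, Z1 \<omega>))
       = distr M2 (borel \<Otimes>\<^sub>M borel \<Otimes>\<^sub>M borel) (\<lambda>\<omega>. (X2 \<omega>, Y2 \<omega>, Z2 \<omega>))"
  shows "bxy1 = bxy2 \<and> byx1 = byx2"
proof -
  note D = assms(3)
  have sem1: "sem_model M1 N1 X1 Y1 Z1 U1 zeta1 eta1 xiY1 xiX1 bxy1 byx1 piX1 piY1"
    and AA1: "assumption_A M1 Y1 (\<lambda>\<omega>. xiY1 (U1 \<omega>) + zeta1 \<omega>) Z1 bxy1 byx1 piX1 piY1 \<or>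
      assumption_A' M1 X1 (\<lambda>\<omega>. xiX1 (U1 \<omega>) + eta1 \<omega>) Z1 bxy1 byx1 piX1 piY1"
    and bc1: "bxy1 * byx1 = 0"
    using assms(1) unfolding admissible_def by auto
  have sem2: "sem_model M2 N2 X2 Y2 Z2 U2 zeta2 eta2 xiY2 xiX2 bxy2 byx2 piX2 piY2"
    and AA2: "assumption_A M2 Y2 (\<lambda>\<omega>. xiY2 (U2 \<omega>) + zeta2 \<omega>) Z2 bxy2 byx2 piX2 piY2 \<or>
      assumption_A' M2 X2 (\<lambda>\<omega>. xiX2 (U2 \<omega>) + eta2 \<omega>) Z2 bxy2 byx2 piX2 piY2"
    and bc2: "bxy2 * byx2 = 0"
    using assms(2) unfolding admissible_def by auto
  interpret m1: model M1 N1 X1 Y1 zeta1 eta1 Z1 U1 xiY1 xiX1 bxy1 byx1 piX1 piY1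
    using sem1 bc1 by unfold_locales
  interpret m2: model M2 N2 X2 Y2 zeta2 eta2 Z2 U2 xiY2 xiX2 bxy2 byx2 piX2 piY2
    using sem2 bc2 by unfold_locales
  have mm1: "(\<lambda>\<omega>. (X1 \<omega>, Y1 \<omega>, Z1 \<omega>)) \<in> measurable M1 (borel \<Otimes>\<^sub>M borel \<Otimes>\<^sub>M borel)" by measurable
  have mm2: "(\<lambda>\<omega>. (X2 \<omega>, Y2 \<omega>, Z2 \<omega>)) \<in> measurable M2 (borel \<Otimes>\<^sub>M borel \<Otimes>\<^sub>M borel)" by measurable
  note vec_comp_meas[measurable]
  have TZ: "(\<integral>\<omega>. Z1 \<omega> $ j * (W1 \<omega> - v \<bullet> Z1 \<omega>) \<partial>M1) = (\<integral>\<omega>. Z2 \<omega> $ j * (W2 \<omega> - v \<bullet> Z2 \<omega>) \<partial>M2)"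
    if "(W1 = X1 \<and> W2 = X2) \<or> (W1 = Y1 \<and> W2 = Y2)" for j v W1 W2
  proof -
    have fX: "(\<lambda>p::real \<times> real \<times> (real^'p). snd (snd p) $ j * (fst p - v \<bullet> snd (snd p))) \<in> borel_measurable (borel \<Otimes>\<^sub>M borel \<Otimes>\<^sub>M borel)" by measurable
    have fY: "(\<lambda>p::real \<times> real \<times> (real^'p). snd (snd p) $ j * (fst (snd p) - v \<bullet> snd (snd p))) \<in> borel_measurable (borel \<Otimes>\<^sub>M borel \<Otimes>\<^sub>M borel)" by measurable
    show ?thesis using that int_transfer[OF D mm1 mm2 fX] int_transfer[OF D mm1 mm2 fY] by auto
  qed
  define g where "g = gammaX bxy1 byx1 piX1 piY1"
  define k where "k = gammaY bxy1 byx1 piX1 piY1"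
  have g2: "gammaX bxy2 byx2 piX2 piY2 = g"
  proof -
    have "gammaX bxy1 byx1 piX1 piY1 = gammaX bxy2 byx2 piX2 piY2"
    proof (rule m1.gam_unique[OF m1.XL2 m1.ZorthX])
      fix j show "(\<integral>\<omega>. Z1 \<omega> $ j * (X1 \<omega> - gammaX bxy2 byx2 piX2 piY2 \<bullet> Z1 \<omega>) \<partial>M1) = 0"
        using TZ[of X1 X2 j] m2.ZorthX by simp
    qed
    then show ?thesis by (simp add: g_def)
  qed
  have k2: "gammaY bxy2 byx2 piX2 piY2 = k"
  proof -
    have "gammaY bxy1 byx1 piX1 piY1 = gammaY bxy2 byx2 piX2 piY2"
    proof (rule m1.gam_unique[OF m1.YL2 m1.ZorthY])
      fix j show "(\<integral>\<omega>. Z1 \<omega> $ j * (Y1 \<omega> - gammaY bxy2 byx2 piX2 piY2 \<bullet> Z1 \<omega>) \<partial>M1) = 0"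
        using TZ[of Y1 Y2 j] m2.ZorthY by simp
    qed
    then show ?thesis by (simp add: k_def)
  qed
  let ?zc = "zc M1 X1 Y1 Z1 g k"
  have ZT: "zc M2 X2 Y2 Z2 g k a bb cc \<longleftrightarrow> ?zc a bb cc" for a bb cc
    using zc_transfer[OF D mm1 mm2] by simp
  have z1: "?zc (-bxy1) 1 (-byx1)" using m1.zc_model unfolding g_def k_def .
  have z2: "?zc (-bxy2) 1 (-byx2)" using m2.zc_model unfolding g2 k2 ZT .
  have nA1: "assumption_A M1 Y1 (\<lambda>\<omega>. xiY1 (U1 \<omega>) + zeta1 \<omega>) Z1 bxy1 byx1 piX1 piY1 \<Longrightarrow>
      gA bxy1 byx1 piX1 piY1 \<and> \<not> ?zc 0 (-bxy1) 1"
    using m1.covY unfolding assumption_A_iff g_def k_def by blast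
  have nA'1: "assumption_A' M1 X1 (\<lambda>\<omega>. xiX1 (U1 \<omega>) + eta1 \<omega>) Z1 bxy1 byx1 piX1 piY1 \<Longrightarrow>
      gA byx1 bxy1 piY1 piX1 \<and> \<not> ?zc 1 (-byx1) 0"
    using m1.covX unfolding assumption_A'_iff g_def k_def by blast
  have nA2: "assumption_A M2 Y2 (\<lambda>\<omega>. xiY2 (U2 \<omega>) + zeta2 \<omega>) Z2 bxy2 byx2 piX2 piY2 \<Longrightarrow>
      gA bxy2 byx2 piX2 piY2 \<and> \<not> ?zc 0 (-bxy2) 1"
    using m2.covY unfolding assumption_A_iff g2 k2 ZT by blast
  have nA'2: "assumption_A' M2 X2 (\<lambda>\<omega>. xiX2 (U2 \<omega>) + eta2 \<omega>) Z2 bxy2 byx2 piX2 piY2 \<Longrightarrow>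
      gA byx2 bxy2 piY2 piX2 \<and> \<not> ?zc 1 (-byx2) 0"
    using m2.covX unfolding assumption_A'_iff g2 k2 ZT by blast
  have pX1: "piX1 = g - byx1 *\<^sub>R k" and pY1: "piY1 = k - bxy1 *\<^sub>R g"
    using m1.piX_eq m1.piY_eq unfolding g_def k_def by auto
  have pX2: "piX2 = g - byx2 *\<^sub>R k" and pY2: "piY2 = k - bxy2 *\<^sub>R g"
    using m2.piX_eq m2.piY_eq unfolding g2 k2 by auto
  have B1: "\<bar>bxy1\<bar> < 1" "\<bar>byx1\<bar> < 1" using m1.bounds by auto
  have B2: "\<bar>bxy2\<bar> < 1" "\<bar>byx2\<bar> < 1" using m2.bounds by auto
  have Ci: "bxy1 = bxy2" if c1: "byx1 = 0" and c2: "byx2 = 0"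
  proof (rule ccontr)
    assume ne0: "bxy1 \<noteq> bxy2"
    then have ne: "bxy2 - bxy1 \<noteq> 0" by simp
    define d where "d = bxy2 - bxy1"
    have dn: "d \<noteq> 0" using ne d_def by simp
    have zd: "?zc d 0 0"
      by (rule zc_lin[OF z1 z2, where s = 1 and t = "- 1"]) (use c1 c2 d_def in simp_all)
    have "?zc 1 0 0"
      by (rule zc_lin[OF zd zd, where s = "1 / d" and t = 0]) (use dn in simp_all)
    then have A1: "gA bxy1 0 g (k - bxy1 *\<^sub>R g)" and A2: "gA bxy2 0 g (k - bxy2 *\<^sub>R g)"
      using AA1 AA2 nA1 nA'1 nA2 nA'2 c1 c2 pX1 pY1 pX2 pY2 by auto
    show False by (rule G1[OF ne0 A1 A2])
  qed
  have Cii: "byx1 = byx2" if b1: "bxy1 = 0" and b2: "bxy2 = 0"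
  proof (rule ccontr)
    assume ne0: "byx1 \<noteq> byx2"
    then have ne: "byx2 - byx1 \<noteq> 0" by simp
    define d where "d = byx2 - byx1"
    have dn: "d \<noteq> 0" using ne d_def by simp
    have zd: "?zc 0 0 d"
      by (rule zc_lin[OF z1 z2, where s = 1 and t = "- 1"]) (use b1 b2 d_def in simp_all)
    have "?zc 0 0 1"
      by (rule zc_lin[OF zd zd, where s = "1 / d" and t = 0]) (use dn in simp_all)
    then have A1: "gA byx1 0 k (g - byx1 *\<^sub>R k)" and A2: "gA byx2 0 k (g - byx2 *\<^sub>R k)"
      using AA1 AA2 nA1 nA'1 nA2 nA'2 b1 b2 pX1 pY1 pX2 pY2 by auto
    show False by (rule G1[OF ne0 A1 A2])
  qed
  have Ciii: False if "byx1 = 0" "bxy2 = 0" "bxy1 \<noteq> 0" "byx2 \<noteq> 0"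
  proof (rule G3[where b = bxy1 and c = byx2 and g = g and k = k])
    show "bxy1 \<noteq> 0" "byx2 \<noteq> 0" by fact+
    show "bxy1 * byx2 \<noteq> 1" using bc_ne_1 B1 B2 by auto
    show "gA bxy1 0 g (k - bxy1 *\<^sub>R g) \<or> gA 0 bxy1 (k - bxy1 *\<^sub>R g) g"
      using AA1 nA1 nA'1 that pX1 pY1 by auto
    show "gA 0 byx2 (g - byx2 *\<^sub>R k) k \<or> gA byx2 0 k (g - byx2 *\<^sub>R k)"
      using AA2 nA2 nA'2 that pX2 pY2 by auto
  qed
  have Civ: False if "bxy1 = 0" "byx2 = 0" "byx1 \<noteq> 0" "bxy2 \<noteq> 0"
  proof (rule G3[where b = bxy2 and c = byx1 and g = g and k = k])
    show "bxy2 \<noteq> 0" "byx1 \<noteq> 0" by fact+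
    show "bxy2 * byx1 \<noteq> 1" using bc_ne_1 B1 B2 by auto
    show "gA bxy2 0 g (k - bxy2 *\<^sub>R g) \<or> gA 0 bxy2 (k - bxy2 *\<^sub>R g) g"
      using AA2 nA2 nA'2 that pX2 pY2 by auto
    show "gA 0 byx1 (g - byx1 *\<^sub>R k) k \<or> gA byx1 0 k (g - byx1 *\<^sub>R k)"
      using AA1 nA1 nA'1 that pX1 pY1 by auto
  qed
  have o1: "bxy1 = 0 \<or> byx1 = 0" using bc1 by simp
  have o2: "bxy2 = 0 \<or> byx2 = 0" using bc2 by simp
  show ?thesis
  proof (cases "byx1 = 0")
    case c1: True
    show ?thesis
    proof (cases "byx2 = 0")
      case True then show ?thesis using Ci c1 by auto
    next
      case False
      then have b2: "bxy2 = 0" using o2 by auto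
      show ?thesis
      proof (cases "bxy1 = 0")
        case True then show ?thesis using Cii b2 by auto
      next
        case False then show ?thesis using Ciii c1 b2 \<open>byx2 \<noteq> 0\<close> by auto
      qed
    qed
  next
    case False
    then have b1: "bxy1 = 0" using o1 by auto
    show ?thesis
    proof (cases "bxy2 = 0")
      case True then show ?thesis using Cii b1 by auto
    next
      case b2: False
      then have c2: "byx2 = 0" using o2 by auto
      show ?thesis using Civ b1 c2 \<open>byx1 \<noteq> 0\<close> b2 by auto
    qed
  qed
qed

end
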